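(* The following are equivalent: (1) $b=0$; (2) either $R$ is Gorenstein (i.e. $r=1$), or $v(R)=\{0,e,2e,\dots,pe\}\cup\{m\in\mathbb Z:m\ge(p+1)e\}$ for some integer $p$; (3) the type sequence of $R$ is $[r,\dots,r]$.
   Context: Let $(R,\mathfrak m)$ be a one-dimensional local Noetherian domain with quotient field $K$, not regular, analytically irreducible (the integral closure $\overline R$ of $R$ in $K$ is a DVR and a finite $R$-module) and residually rational. Let $v$ be the valuation of $\overline R$ normalized so a uniformizer has value 1, $v(R)=\{v(a):a\in R\setminus\{0\}\}$, $c$ the least element of $v(R)$ with $c+\mathbb N\subseteq v(R)$, $\delta=\ell_R(\overline R/R)$, $r=\ell_R((R:_K\mathfrak m)/R)$, $b=(c-\delta)r-\delta$, $e$ the least positive element of $v(R)$, $n=c-\delta$. Write $v(R)=\{s_0=0<s_1<\cdots\}$, $R_i=\{a\in R:v(a)\ge s_i\}$, $r_i=\ell_R((R:_KR_i)/(R:_KR_{i-1}))$; the type sequence is $[r_1,\dots,r_n]$. *)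

theory Defs
  imports Main
begin

(* Everything lives inside a fixed field 'k, which plays the role of the quotient field K.
   Rings and modules are subsets of 'k. *)

definition subring :: "'k::field set \<Rightarrow> bool" where
  "subring R \<longleftrightarrow> 0 \<in> R \<and> 1 \<in> R \<and> (\<forall>x\<in>R. \<forall>y\<in>R. x + y \<in> R \<and> x - y \<in> R \<and> x * y \<in> R)"

(* K = UNIV is the quotient field of R *)
definition quotient_field_of :: "'k::field set \<Rightarrow> bool" where
  "quotient_field_of R \<longleftrightarrow> (\<forall>x. \<exists>a\<in>R. \<exists>b\<in>R. b \<noteq> 0 \<and> x = a / b)"

definition submod :: "'k::field set \<Rightarrow> 'k set \<Rightarrow> bool" where
  "submod R M \<longleftrightarrow> 0 \<in> M \<and> (\<forall>x\<in>M. \<forall>y\<in>M. x + y \<in> M) \<and> (\<forall>a\<in>R. \<forall>x\<in>M. a * x \<in> M)"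

definition ideal_of :: "'k::field set \<Rightarrow> 'k set \<Rightarrow> bool" where
  "ideal_of R I \<longleftrightarrow> submod R I \<and> I \<subseteq> R"

definition prime_ideal_of :: "'k::field set \<Rightarrow> 'k set \<Rightarrow> bool" where
  "prime_ideal_of R P \<longleftrightarrow> ideal_of R P \<and> P \<noteq> R \<and> (\<forall>a\<in>R. \<forall>b\<in>R. a * b \<in> P \<longrightarrow> a \<in> P \<or> b \<in> P)"

(* the set of non-units of R; R is local iff this is an ideal, and then it is the maximal ideal m *)
definition maxideal :: "'k::field set \<Rightarrow> 'k set" where
  "maxideal R = {a \<in> R. a = 0 \<or> inverse a \<notin> R}"

definition local_ring :: "'k::field set \<Rightarrow> bool" where
  "local_ring R \<longleftrightarrow> ideal_of R (maxideal R) \<and> maxideal R \<noteq> R"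

definition noetherian :: "'k::field set \<Rightarrow> bool" where
  "noetherian R \<longleftrightarrow> \<not> (\<exists>C :: nat \<Rightarrow> 'k set. \<forall>i. ideal_of R (C i) \<and> C i \<subset> C (Suc i))"

(* Krull dimension one for a local domain: there is a nonzero prime and every nonzero prime
   ideal is maximal (hence equals the maximal ideal) *)
definition dim_one_local :: "'k::field set \<Rightarrow> bool" where
  "dim_one_local R \<longleftrightarrow> maxideal R \<noteq> {0} \<and>
     (\<forall>P. prime_ideal_of R P \<and> P \<noteq> {0} \<longrightarrow> P = maxideal R)"

(* regular one-dimensional local ring: maximal ideal is principal *)
definition regular_local :: "'k::field set \<Rightarrow> bool" where
  "regular_local R \<longleftrightarrow> (\<exists>t\<in>R. maxideal R = {t * a | a. a \<in> R})"

definition int_closure :: "'k::field set \<Rightarrow> 'k set" where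
  "int_closure R = {x. \<exists>n>0. \<exists>a :: nat \<Rightarrow> 'k. (\<forall>i<n. a i \<in> R) \<and> x ^ n + (\<Sum>i<n. a i * x ^ i) = 0}"

(* normalized discrete valuation of K (values of nonzero elements; a uniformizer has value 1) *)
definition discrete_valuation :: "('k::field \<Rightarrow> int) \<Rightarrow> bool" where
  "discrete_valuation v \<longleftrightarrow>
     (\<forall>x y. x \<noteq> 0 \<longrightarrow> y \<noteq> 0 \<longrightarrow> v (x * y) = v x + v y) \<and>
     (\<forall>x y. x \<noteq> 0 \<longrightarrow> y \<noteq> 0 \<longrightarrow> x + y \<noteq> 0 \<longrightarrow> min (v x) (v y) \<le> v (x + y)) \<and>
     (\<exists>t. t \<noteq> 0 \<and> v t = 1)"

definition val_ring :: "('k::field \<Rightarrow> int) \<Rightarrow> 'k set" where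
  "val_ring v = {x. x = 0 \<or> 0 \<le> v x}"

definition val_maxideal :: "('k::field \<Rightarrow> int) \<Rightarrow> 'k set" where
  "val_maxideal v = {x. x = 0 \<or> 0 < v x}"

definition finite_module :: "'k::field set \<Rightarrow> 'k set \<Rightarrow> bool" where
  "finite_module R M \<longleftrightarrow> (\<exists>F. finite F \<and> M = {\<Sum>x\<in>F. a x * x | a. \<forall>x\<in>F. a x \<in> R})"

(* residually rational: R/m -> Rbar/mbar is onto (it is always injective) *)
definition residually_rational :: "'k::field set \<Rightarrow> ('k \<Rightarrow> int) \<Rightarrow> bool" where
  "residually_rational R v \<longleftrightarrow> (\<forall>x\<in>int_closure R. \<exists>a\<in>R. x - a \<in> val_maxideal v)"

definition colon :: "'k::field set \<Rightarrow> 'k set \<Rightarrow> 'k set" where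
  "colon M N = {x. \<forall>y\<in>N. x * y \<in> M}"

definition mod_length :: "'k::field set \<Rightarrow> 'k set \<Rightarrow> 'k set \<Rightarrow> nat" where
  "mod_length R M N = Sup {k. \<exists>C :: nat \<Rightarrow> 'k set. C 0 = N \<and> C k = M \<and>
      (\<forall>i\<le>k. submod R (C i)) \<and> (\<forall>i<k. C i \<subset> C (Suc i))}"

definition value_semigroup :: "'k::field set \<Rightarrow> ('k \<Rightarrow> int) \<Rightarrow> int set" where
  "value_semigroup R v = {v a | a. a \<in> R \<and> a \<noteq> 0}"

definition conductor_val :: "'k::field set \<Rightarrow> ('k \<Rightarrow> int) \<Rightarrow> int" where
  "conductor_val R v = (LEAST c. c \<in> value_semigroup R v \<and> (\<forall>k::nat. c + int k \<in> value_semigroup R v))"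

definition multiplicity_val :: "'k::field set \<Rightarrow> ('k \<Rightarrow> int) \<Rightarrow> int" where
  "multiplicity_val R v = (LEAST e. e \<in> value_semigroup R v \<and> 0 < e)"

definition delta_inv :: "'k::field set \<Rightarrow> int" where
  "delta_inv R = int (mod_length R (int_closure R) R)"

definition cm_type :: "'k::field set \<Rightarrow> int" where
  "cm_type R = int (mod_length R (colon R (maxideal R)) R)"

definition b_inv :: "'k::field set \<Rightarrow> ('k \<Rightarrow> int) \<Rightarrow> int" where
  "b_inv R v = (conductor_val R v - delta_inv R) * cm_type R - delta_inv R"

fun sg_elem :: "'k::field set \<Rightarrow> ('k \<Rightarrow> int) \<Rightarrow> nat \<Rightarrow> int" where
  "sg_elem R v 0 = 0"
| "sg_elem R v (Suc i) = (LEAST x. x \<in> value_semigroup R v \<and> sg_elem R v i < x)"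

definition val_ideal :: "'k::field set \<Rightarrow> ('k \<Rightarrow> int) \<Rightarrow> nat \<Rightarrow> 'k set" where
  "val_ideal R v i = {a \<in> R. a = 0 \<or> sg_elem R v i \<le> v a}"

(* r_i = l_R((R :_K R_i)/(R :_K R_{i-1})), for i >= 1 *)
definition type_seq_term :: "'k::field set \<Rightarrow> ('k \<Rightarrow> int) \<Rightarrow> nat \<Rightarrow> int" where
  "type_seq_term R v i = int (mod_length R (colon R (val_ideal R v i)) (colon R (val_ideal R v (i - 1))))"

definition type_sequence :: "'k::field set \<Rightarrow> ('k \<Rightarrow> int) \<Rightarrow> int list" where
  "type_sequence R v = map (type_seq_term R v) [1..<nat (conductor_val R v - delta_inv R) + 1]"

end

theory Submission
  imports Defs
begin

definition vs :: "('k::field \<Rightarrow> int) \<Rightarrow> 'k set \<Rightarrow> int set" where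
  "vs v M = {v x | x. x \<in> M \<and> x \<noteq> 0}"

definition chain :: "'k::field set \<Rightarrow> 'k set \<Rightarrow> 'k set \<Rightarrow> nat \<Rightarrow> (nat \<Rightarrow> 'k set) \<Rightarrow> bool" where
  "chain R N M k C \<longleftrightarrow> C 0 = N \<and> C k = M \<and> (\<forall>i\<le>k. submod R (C i)) \<and> (\<forall>i<k. C i \<subset> C (Suc i))"

lemma chain_mono: "chain R N M k C \<Longrightarrow> i \<le> j \<Longrightarrow> j \<le> k \<Longrightarrow> C i \<subseteq> C j"
proof (induction j)
  case 0 then show ?case by simp
next
  case (Suc j)
  then show ?case unfolding chain_def
    by (metis Suc_leD Suc_le_lessD le_SucE order.trans psubset_imp_subset order_refl)
qed

lemma vs_mono: "A \<subseteq> B \<Longrightarrow> vs v A \<subseteq> vs v B"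
  unfolding vs_def by blast

lemma int_least:
  fixes P :: "int \<Rightarrow> bool"
  assumes "P k" "\<forall>x. P x \<longrightarrow> 0 \<le> x"
  shows "P (LEAST x. P x) \<and> (\<forall>y. P y \<longrightarrow> (LEAST x. P x) \<le> y)"
proof -
  have ex: "P (int (nat k))" using assms by simp
  define n where "n = (LEAST n::nat. P (int n))"
  have Pn: "P (int n)" unfolding n_def using LeastI[of "\<lambda>n. P (int n)" "nat k"] ex .
  have le: "\<forall>y. P y \<longrightarrow> int n \<le> y"
  proof (intro allI impI)
    fix y assume y: "P y"
    then have "0 \<le> y" using assms by blast
    then have "P (int (nat y))" using y by simp
    then have "n \<le> nat y" unfolding n_def by (rule Least_le)
    then show "int n \<le> y" using \<open>0 \<le> y\<close> by simp
  qed
  have "(LEAST x. P x) = int n" by (rule Least_equality) (use Pn le in auto)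
  then show ?thesis using Pn le by simp
qed

lemma telescope:
  fixes F :: "nat \<Rightarrow> 'a set"
  shows "(\<forall>i<n. F i \<subseteq> F (Suc i)) \<longrightarrow> finite (F n - F 0) \<longrightarrow>
    (\<Sum>i\<in>{1..n}. card (F i - F (i - 1))) = card (F n - F 0)"
proof (induction n)
  case 0 then show ?case by simp
next
  case (Suc n)
  show ?case
  proof (intro impI)
    assume mono: "\<forall>i<Suc n. F i \<subseteq> F (Suc i)" and fin: "finite (F (Suc n) - F 0)"
    have m: "\<forall>i<n. F i \<subseteq> F (Suc i)" using mono by simp
    have F0n: "F 0 \<subseteq> F n"
    proof -
      have "\<forall>j. j \<le> n \<longrightarrow> F 0 \<subseteq> F j"
      proof (intro allI)
        fix j show "j \<le> n \<longrightarrow> F 0 \<subseteq> F j"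
          by (induction j) (use m in \<open>auto simp: Suc_le_eq\<close>)
      qed
      then show ?thesis by simp
    qed
    have Fn: "F n \<subseteq> F (Suc n)" using mono by simp
    have fin1: "finite (F n - F 0)" using fin Fn finite_subset[of "F n - F 0" "F (Suc n) - F 0"] by blast
    have fin2: "finite (F (Suc n) - F n)" using fin F0n finite_subset[of "F (Suc n) - F n" "F (Suc n) - F 0"] by blast
    have IH: "(\<Sum>i\<in>{1..n}. card (F i - F (i - 1))) = card (F n - F 0)" using Suc m fin1 by blast
    have split: "F (Suc n) - F 0 = (F (Suc n) - F n) \<union> (F n - F 0)" using F0n Fn by blast
    have "card (F (Suc n) - F 0) = card (F (Suc n) - F n) + card (F n - F 0)"
      unfolding split by (rule card_Un_disjoint[OF fin2 fin1]) blast
    moreover have "(\<Sum>i\<in>{1..Suc n}. card (F i - F (i - 1))) = (\<Sum>i\<in>{1..n}. card (F i - F (i - 1))) + card (F (Suc n) - F n)"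
      by simp
    ultimately show "(\<Sum>i\<in>{1..Suc n}. card (F i - F (i - 1))) = card (F (Suc n) - F 0)" using IH by simp
  qed
qed

lemma rep_iff: "xs = replicate (length xs) t \<longleftrightarrow> (\<forall>y\<in>set xs. y = t)"
proof
  assume "xs = replicate (length xs) t"
  then have "set xs = set (replicate (length xs) t)" by simp
  then show "\<forall>y\<in>set xs. y = t" by (simp add: set_replicate_conv_if split: if_splits)
next
  assume "\<forall>y\<in>set xs. y = t"
  then show "xs = replicate (length xs) t" by (simp add: replicate_length_same)
qed

locale asetup =
  fixes R :: "'k::field set" and v :: "'k \<Rightarrow> int"
  assumes sub: "subring R"
    and qf: "quotient_field_of R"
    and dv: "discrete_valuation v"
    and ic: "int_closure R = val_ring v"
    and fm: "finite_module R (int_closure R)"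
    and rr: "residually_rational R v"
    and nreg: "\<not> regular_local R"
begin

lemma vmult: "x \<noteq> 0 \<Longrightarrow> y \<noteq> 0 \<Longrightarrow> v (x*y) = v x + v y"
  using dv unfolding discrete_valuation_def by blast

lemma vadd: "x \<noteq> 0 \<Longrightarrow> y \<noteq> 0 \<Longrightarrow> x+y \<noteq> 0 \<Longrightarrow> min (v x) (v y) \<le> v (x+y)"
  using dv unfolding discrete_valuation_def by blast

lemma v1: "v 1 = 0"
  using vmult[of 1 1] by simp

lemma vm1: "v (-1) = 0"
  using vmult[of "-1" "-1"] v1 by simp

lemma vneg: "x \<noteq> 0 \<Longrightarrow> v (-x) = v x"
  using vmult[of "-1" x] vm1 by simp

lemma vinv: "x \<noteq> 0 \<Longrightarrow> v (inverse x) = - v x"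
  using vmult[of x "inverse x"] v1 by simp

lemma vdiv: "x \<noteq> 0 \<Longrightarrow> y \<noteq> 0 \<Longrightarrow> v (x / y) = v x - v y"
  using vmult[of x "inverse y"] vinv[of y] by (simp add: divide_inverse)

lemma vadd_lt: assumes "x \<noteq> 0" "y \<noteq> 0" "v x < v y" shows "x + y \<noteq> 0" "v (x + y) = v x"
proof -
  show nz: "x + y \<noteq> 0"
  proof
    assume "x + y = 0" then have "x = - y" by (simp add: eq_neg_iff_add_eq_0)
    then show False using assms vneg by simp
  qed
  have a: "min (v x) (v y) \<le> v (x+y)" using vadd assms nz by blast
  have "min (v (x+y)) (v (-y)) \<le> v ((x+y) + (-y))"
    using vadd[of "x+y" "-y"] nz assms by simp
  then have "min (v (x+y)) (v y) \<le> v x" using vneg assms by simp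
  then show "v (x + y) = v x" using a assms by linarith
qed

lemma vdiff_ge: assumes "x \<noteq> 0" "y \<noteq> 0" "x - y \<noteq> 0" shows "min (v x) (v y) \<le> v (x - y)"
  using vadd[of x "-y"] vneg[of y] assms by simp

lemma vsum_cases: assumes "x \<noteq> 0" "y \<noteq> 0" "x + y \<noteq> 0"
  shows "v (x+y) = v x \<and> v x < v y \<or> v (x+y) = v y \<and> v y < v x \<or> (v x = v y \<and> v x \<le> v (x+y))"
proof -
  consider "v x < v y" | "v y < v x" | "v x = v y" by linarith
  then show ?thesis
  proof cases
    case 1 then show ?thesis using vadd_lt[of x y] assms by simp
  next
    case 2 then show ?thesis using vadd_lt[of y x] assms by (simp add: add.commute)
  next
    case 3 then show ?thesis using vadd[of x y] assms by simp
  qed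
qed

lemma vpow: "t \<noteq> 0 \<Longrightarrow> v (t ^ n) = int n * v t"
  by (induction n) (auto simp: v1 vmult algebra_simps)

lemma vval: "\<exists>x. x \<noteq> 0 \<and> v x = j"
proof -
  obtain t where t: "t \<noteq> 0" "v t = 1" using dv unfolding discrete_valuation_def by blast
  show ?thesis
  proof (cases "0 \<le> j")
    case True
    then show ?thesis using vpow[of t "nat j"] t by (intro exI[of _ "t ^ nat j"]) auto
  next
    case False
    then show ?thesis using vpow[of t "nat (-j)"] t vinv[of "t ^ nat (-j)"]
      by (intro exI[of _ "inverse (t ^ nat (-j))"]) auto
  qed
qed

abbreviation "Rb \<equiv> val_ring v"

lemma Rb_iff: "x \<in> Rb \<longleftrightarrow> x = 0 \<or> 0 \<le> v x"
  by (simp add: val_ring_def)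

lemma R0: "0 \<in> R" and R1: "1 \<in> R"
  using sub by (auto simp: subring_def)
lemma Radd: "a \<in> R \<Longrightarrow> b \<in> R \<Longrightarrow> a + b \<in> R"
  and Rdiff: "a \<in> R \<Longrightarrow> b \<in> R \<Longrightarrow> a - b \<in> R"
  and Rmult: "a \<in> R \<Longrightarrow> b \<in> R \<Longrightarrow> a * b \<in> R"
  using sub by (auto simp: subring_def)
lemma Rneg: "a \<in> R \<Longrightarrow> - a \<in> R"
  using Rdiff[of 0 a] R0 by simp

lemma Rsum: "finite A \<Longrightarrow> (\<And>x. x \<in> A \<Longrightarrow> f x \<in> R) \<Longrightarrow> sum f A \<in> R"
  by (induction A rule: finite_induct) (auto simp: R0 Radd)

lemma R_Rb: "a \<in> R \<Longrightarrow> a \<in> Rb"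
proof -
  assume a: "a \<in> R"
  have "a \<in> int_closure R"
    unfolding int_closure_def
    by (rule CollectI, rule exI[of _ 1], simp, rule exI[of _ "\<lambda>_. - a"], simp add: Rneg a)
  then show ?thesis using ic by simp
qed

lemma R_nonneg: "a \<in> R \<Longrightarrow> a \<noteq> 0 \<Longrightarrow> 0 \<le> v a"
  using R_Rb Rb_iff by blast

lemma denom: "\<exists>d \<in> R. d \<noteq> 0 \<and> (\<forall>z \<in> Rb. d * z \<in> R)"
proof -
  obtain F where F: "finite F" "int_closure R = {\<Sum>x\<in>F. a x * x | a. \<forall>x\<in>F. a x \<in> R}"
    using fm unfolding finite_module_def by blast
  have "\<exists>d \<in> R. d \<noteq> 0 \<and> (\<forall>y\<in>G. d * y \<in> R)" if "finite G" for G :: "'k set"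
    using that
  proof (induction G rule: finite_induct)
    case empty then show ?case using R1 by (intro bexI[of _ 1]) auto
  next
    case (insert y G)
    then obtain d where d: "d \<in> R" "d \<noteq> 0" "\<forall>y\<in>G. d * y \<in> R" by blast
    obtain a b where ab: "a \<in> R" "b \<in> R" "b \<noteq> 0" "y = a / b" using qf unfolding quotient_field_of_def by blast
    have "d * b * y = d * a" using ab by simp
    then have 1: "d * b * y \<in> R" using Rmult d ab by simp
    have 2: "d * b * z \<in> R" if "z \<in> G" for z
    proof -
      have eq: "d * b * z = b * (d * z)" by (simp add: algebra_simps)
      have "d * z \<in> R" using d that by blast
      then show ?thesis unfolding eq by (rule Rmult[OF ab(2)])
    qed
    have 3: "d * b \<in> R" "d * b \<noteq> 0" using Rmult d ab by auto
    show ?case using 1 2 3 by blast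
  qed
  then obtain d where d: "d \<in> R" "d \<noteq> 0" "\<forall>y\<in>F. d * y \<in> R" using F by blast
  have "d * z \<in> R" if zz: "z \<in> Rb" for z
  proof -
    have "z \<in> {\<Sum>x\<in>F. a x * x | a. \<forall>x\<in>F. a x \<in> R}" using F ic zz by auto
    then obtain a where a: "\<forall>x\<in>F. a x \<in> R" "z = (\<Sum>x\<in>F. a x * x)" by blast
    have "d * z = (\<Sum>x\<in>F. d * (a x * x))" unfolding a(2) by (rule sum_distrib_left)
    also have "\<dots> = (\<Sum>x\<in>F. a x * (d * x))" by (rule sum.cong) (auto simp: mult.left_commute)
    also have "\<dots> \<in> R"
    proof (rule Rsum[OF F(1)])
      fix x assume "x \<in> F" then show "a x * (d * x) \<in> R" using a d Rmult by blast
    qed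
    finally show ?thesis .
  qed
  then show ?thesis using d by blast
qed

lemma K0_ex: "\<exists>K0. \<forall>x. x \<noteq> 0 \<and> K0 \<le> v x \<longrightarrow> x \<in> R"
proof -
  obtain d where d: "d \<in> R" "d \<noteq> 0" "\<forall>z \<in> Rb. d * z \<in> R" using denom by blast
  have "x \<in> R" if "x \<noteq> 0" "v d \<le> v x" for x
  proof -
    have "x / d \<in> Rb" using vdiv[of x d] that d by (simp add: Rb_iff)
    then have "d * (x / d) \<in> R" using d by blast
    then show ?thesis using d by simp
  qed
  then show ?thesis by blast
qed

lemma sm_zero: "submod R M \<Longrightarrow> 0 \<in> M"
  and sm_add: "submod R M \<Longrightarrow> x \<in> M \<Longrightarrow> y \<in> M \<Longrightarrow> x + y \<in> M"
  and sm_smult: "submod R M \<Longrightarrow> a \<in> R \<Longrightarrow> x \<in> M \<Longrightarrow> a * x \<in> M"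
  unfolding submod_def by auto

lemma sm_neg: "submod R M \<Longrightarrow> x \<in> M \<Longrightarrow> - x \<in> M"
  using sm_smult[of M "-1" x] Rneg[OF R1] by simp

lemma sm_diff: "submod R M \<Longrightarrow> x \<in> M \<Longrightarrow> y \<in> M \<Longrightarrow> x - y \<in> M"
  using sm_add[of M x "-y"] sm_neg[of M y] by simp

lemma sep:
  assumes N: "submod R N" and M: "submod R M" and NM: "N \<subseteq> M" and MRb: "M \<subseteq> Rb"
    and RN: "R \<subseteq> N" and ne: "N \<noteq> M"
  shows "\<exists>w \<in> vs v M. w \<notin> vs v N"
proof -
  obtain K0 where K: "\<forall>x. x \<noteq> 0 \<and> K0 \<le> v x \<longrightarrow> x \<in> R" using K0_ex by blast
  define X where "X = {v x | x. x \<in> M \<and> x \<notin> N}"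
  have Xsub: "X \<subseteq> {0..<K0}"
  proof
    fix w assume "w \<in> X"
    then obtain x where x: "x \<in> M" "x \<notin> N" "w = v x" unfolding X_def by blast
    have "x \<noteq> 0" using x sm_zero[OF N] by auto
    then show "w \<in> {0..<K0}" using x MRb K RN Rb_iff by force
  qed
  have Xne: "X \<noteq> {}" using NM ne unfolding X_def by blast
  have fin: "finite X" using Xsub finite_subset by blast
  define w where "w = Max X"
  have wX: "w \<in> X" and maxp: "\<forall>y\<in>X. y \<le> w" using fin Xne w_def by auto
  obtain x where x: "x \<in> M" "x \<notin> N" "v x = w" using wX unfolding X_def by blast
  have x0: "x \<noteq> 0" using x sm_zero[OF N] by auto
  show ?thesis
  proof (rule bexI[of _ w])
    show "w \<in> vs v M" using x x0 unfolding vs_def by blast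
    show "w \<notin> vs v N"
    proof
      assume "w \<in> vs v N"
      then obtain y where y: "y \<in> N" "y \<noteq> 0" "v y = w" unfolding vs_def by blast
      have vq: "v (x / y) = 0" using vdiv[of x y] x0 y x by simp
      have q: "x / y \<in> Rb" using vq by (simp add: Rb_iff)
      obtain a where a: "a \<in> R" "x / y - a \<in> val_maxideal v"
        using rr ic q unfolding residually_rational_def by auto
      have ay: "a * y \<in> N" using sm_smult[OF N a(1) y(1)] .
      have xa: "x - a * y \<in> M" using sm_diff[OF M x(1)] ay NM by blast
      have xn: "x - a * y \<notin> N"
      proof
        assume "x - a * y \<in> N"
        then have "(x - a * y) + a * y \<in> N" using sm_add[OF N] ay by blast
        then show False using x by simp
      qed
      have eq: "x - a * y = y * (x / y - a)" using y(2) by (simp add: field_simps)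
      have nz: "x / y - a \<noteq> 0"
      proof
        assume "x / y - a = 0"
        then have "x - a * y = 0" using eq by simp
        then show False using xn sm_zero[OF N] by simp
      qed
      then have pos: "0 < v (x / y - a)" using a(2) unfolding val_maxideal_def by simp
      have "v (x - a * y) = v y + v (x / y - a)" using eq vmult[OF y(2) nz] by simp
      then have "w < v (x - a * y)" using pos y by simp
      moreover have "v (x - a * y) \<in> X" using xa xn unfolding X_def by blast
      ultimately show False using maxp by force
    qed
  qed
qed

lemma fin_diff:
  assumes "M \<subseteq> Rb" "R \<subseteq> N"
  shows "finite (vs v M - vs v N)"
proof -
  obtain K0 where K: "\<forall>x. x \<noteq> 0 \<and> K0 \<le> v x \<longrightarrow> x \<in> R" using K0_ex by blast
  have "vs v M - vs v N \<subseteq> {0..<K0}"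
  proof
    fix w assume w: "w \<in> vs v M - vs v N"
    then obtain x where x: "x \<in> M" "x \<noteq> 0" "w = v x" unfolding vs_def by blast
    have "0 \<le> w" using x assms Rb_iff by auto
    moreover have "w < K0"
    proof (rule ccontr)
      assume "\<not> w < K0"
      then have "x \<in> N" using K x assms by auto
      then show False using w x unfolding vs_def by blast
    qed
    ultimately show "w \<in> {0..<K0}" by simp
  qed
  then show ?thesis using finite_subset by blast
qed

lemma chain_le:
  assumes N: "submod R N" and RN: "R \<subseteq> N" and MRb: "M \<subseteq> Rb" and ch: "chain R N M k C"
  shows "k \<le> card (vs v M - vs v N)"
proof -
  have fin: "finite (vs v M - vs v N)" using fin_diff MRb RN by blast
  have "j \<le> k \<longrightarrow> j \<le> card (vs v (C j) - vs v N)" for j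
  proof (induction j)
    case 0 then show ?case by simp
  next
    case (Suc j)
    show ?case
    proof
      assume jk: "Suc j \<le> k"
      have ps: "C j \<subset> C (Suc j)" using ch jk unfolding chain_def by simp
      have sm1: "submod R (C j)" "submod R (C (Suc j))" using ch jk unfolding chain_def by auto
      have NC: "N \<subseteq> C j" using chain_mono[OF ch, of 0 j] ch jk unfolding chain_def by simp
      have CM: "C (Suc j) \<subseteq> M" using chain_mono[OF ch, of "Suc j" k] ch jk unfolding chain_def by simp
      obtain w where w: "w \<in> vs v (C (Suc j))" "w \<notin> vs v (C j)"
        using sep[OF sm1(1) sm1(2)] ps CM MRb NC RN by blast
      have s1: "vs v (C j) - vs v N \<subset> vs v (C (Suc j)) - vs v N"
        using w vs_mono[of N "C j" v] vs_mono[of "C j" "C (Suc j)" v] NC ps by blast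
      have s2: "vs v (C (Suc j)) - vs v N \<subseteq> vs v M - vs v N" using vs_mono[OF CM] by blast
      have "card (vs v (C j) - vs v N) < card (vs v (C (Suc j)) - vs v N)"
        using psubset_card_mono[OF finite_subset[OF s2 fin] s1] .
      then show "Suc j \<le> card (vs v (C (Suc j)) - vs v N)" using Suc jk by simp
    qed
  qed
  then show ?thesis using ch unfolding chain_def by auto
qed

lemma eq_of_vs:
  assumes N: "submod R N" and M: "submod R M" and NM: "N \<subseteq> M" and MRb: "M \<subseteq> Rb"
    and RN: "R \<subseteq> N" and vsub: "vs v M \<subseteq> vs v N"
  shows "N = M"
  using sep[OF N M NM MRb RN] vsub by blast

lemma chain_ex:
  assumes N: "submod R N" and RN: "R \<subseteq> N"
  shows "\<forall>M. submod R M \<longrightarrow> N \<subseteq> M \<longrightarrow> M \<subseteq> Rb \<longrightarrow> card (vs v M - vs v N) = k \<longrightarrow> (\<exists>C. chain R N M k C)"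
proof (induction k)
  case 0
  show ?case
  proof (intro allI impI)
    fix M assume M: "submod R M" "N \<subseteq> M" "M \<subseteq> Rb" "card (vs v M - vs v N) = 0"
    have "vs v M - vs v N = {}" using M fin_diff[OF M(3) RN] by simp
    then have "N = M" using eq_of_vs[OF N M(1) M(2) M(3) RN] by blast
    then show "\<exists>C. chain R N M 0 C" using N unfolding chain_def by (intro exI[of _ "\<lambda>_. N"]) simp
  qed
next
  case (Suc k)
  show ?case
  proof (intro allI impI)
    fix M assume M: "submod R M" "N \<subseteq> M" "M \<subseteq> Rb" "card (vs v M - vs v N) = Suc k"
    define G where "G = vs v M - vs v N"
    have finG: "finite G" using fin_diff[OF M(3) RN] G_def by simp
    have Gne: "G \<noteq> {}" using M(4) G_def by (metis card.empty nat.simps(3))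
    define g where "g = Min G"
    have gG: "g \<in> G" and gmin: "\<forall>w\<in>G. g \<le> w" using finG Gne g_def by auto
    define M' where "M' = {y + z | y z. y \<in> N \<and> z \<in> M \<and> (z = 0 \<or> g < v z)}"
    have M'sub: "submod R M'" unfolding submod_def
    proof (intro conjI ballI)
      show "0 \<in> M'" unfolding M'_def using sm_zero[OF N] sm_zero[OF M(1)] by force
    next
      fix p q assume "p \<in> M'" "q \<in> M'"
      then obtain y1 z1 y2 z2 where yz: "p = y1 + z1" "y1 \<in> N" "z1 \<in> M" "z1 = 0 \<or> g < v z1"
        "q = y2 + z2" "y2 \<in> N" "z2 \<in> M" "z2 = 0 \<or> g < v z2" unfolding M'_def by blast
      have "z1 + z2 = 0 \<or> g < v (z1 + z2)"
      proof (cases "z1 = 0 \<or> z2 = 0 \<or> z1 + z2 = 0")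
        case True then show ?thesis using yz by auto
      next
        case False then show ?thesis using vadd[of z1 z2] yz by auto
      qed
      moreover have "p + q = (y1 + y2) + (z1 + z2)" using yz by simp
      ultimately show "p + q \<in> M'" unfolding M'_def using sm_add[OF N] sm_add[OF M(1)] yz by blast
    next
      fix a p assume a: "a \<in> R" and "p \<in> M'"
      then obtain y z where yz: "p = y + z" "y \<in> N" "z \<in> M" "z = 0 \<or> g < v z" unfolding M'_def by blast
      have "a * z = 0 \<or> g < v (a * z)"
      proof (cases "a = 0 \<or> z = 0")
        case True then show ?thesis by auto
      next
        case False then show ?thesis using vmult[of a z] R_nonneg[OF a] yz by auto
      qed
      moreover have "a * p = a * y + a * z" using yz by (simp add: algebra_simps)
      ultimately show "a * p \<in> M'" unfolding M'_def using sm_smult[OF N a] sm_smult[OF M(1) a] yz by blast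
    qed
    have NM': "N \<subseteq> M'" unfolding M'_def using sm_zero[OF M(1)] by force
    have M'M: "M' \<subseteq> M" unfolding M'_def using sm_add[OF M(1)] M(2) by blast
    have vsM': "vs v M' - vs v N = G - {g}"
    proof
      show "vs v M' - vs v N \<subseteq> G - {g}"
      proof
        fix w assume w: "w \<in> vs v M' - vs v N"
        then obtain p where p: "p \<in> M'" "p \<noteq> 0" "w = v p" unfolding vs_def by blast
        then obtain y z where yz: "p = y + z" "y \<in> N" "z \<in> M" "z = 0 \<or> g < v z" unfolding M'_def by blast
        have wG: "w \<in> G" using w vs_mono[OF M'M] G_def by blast
        have "g < w"
        proof (cases "z = 0")
          case True then have "w \<in> vs v N" using p yz unfolding vs_def by auto
          then show ?thesis using w by blast
        next
          case z0: False
          show ?thesis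
          proof (cases "y = 0")
            case True then show ?thesis using p yz z0 by simp
          next
            case y0: False
            have "v p = v y \<and> v y < v z \<or> v p = v z \<and> v z < v y \<or> (v y = v z \<and> v y \<le> v p)"
              using vsum_cases[OF y0 z0] p yz by simp
            moreover have "v y \<in> vs v N" using yz y0 unfolding vs_def by blast
            ultimately show ?thesis using w p yz z0 by auto
          qed
        qed
        then show "w \<in> G - {g}" using wG by simp
      qed
    next
      show "G - {g} \<subseteq> vs v M' - vs v N"
      proof
        fix w assume w: "w \<in> G - {g}"
        then have gw: "g < w" using gmin by force
        obtain x where x: "x \<in> M" "x \<noteq> 0" "v x = w" using w G_def unfolding vs_def by blast
        have "x = 0 + x" by simp
        then have "x \<in> M'" unfolding M'_def using x gw sm_zero[OF N] by blast
        then show "w \<in> vs v M' - vs v N" using x w G_def unfolding vs_def by blast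
      qed
    qed
    have cardM': "card (vs v M' - vs v N) = k" using vsM' M(4) G_def gG finG by simp
    obtain C' where C': "chain R N M' k C'"
      using Suc.IH M'sub NM' M'M M(3) cardM' by blast
    have M'ne: "M' \<noteq> M"
    proof
      assume "M' = M"
      then have "g \<in> G - {g}" using vsM' gG G_def by simp
      then show False by simp
    qed
    define C where "C = (\<lambda>i. if i \<le> k then C' i else M)"
    have "chain R N M (Suc k) C" unfolding chain_def
    proof (intro conjI allI impI)
      show "C 0 = N" using C' unfolding C_def chain_def by simp
      show "C (Suc k) = M" unfolding C_def by simp
      fix i
      show "i \<le> Suc k \<Longrightarrow> submod R (C i)" using C' M(1) unfolding C_def chain_def by auto
      assume i: "i < Suc k"
      show "C i \<subset> C (Suc i)"
      proof (cases "Suc i \<le> k")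
        case True then show ?thesis using C' unfolding C_def chain_def by simp
      next
        case False then have "i = k" using i by simp
        then show ?thesis using C' M'M M'ne unfolding C_def chain_def by auto
      qed
    qed
    then show "\<exists>C. chain R N M (Suc k) C" by blast
  qed
qed

lemma len:
  assumes N: "submod R N" and M: "submod R M" and NM: "N \<subseteq> M" and MRb: "M \<subseteq> Rb"
    and RN: "R \<subseteq> N"
  shows "mod_length R M N = card (vs v M - vs v N)"
proof -
  have eq: "{k. \<exists>C. C 0 = N \<and> C k = M \<and> (\<forall>i\<le>k. submod R (C i)) \<and> (\<forall>i<k. C i \<subset> C (Suc i))}
     = {k. \<exists>C. chain R N M k C}" unfolding chain_def by simp
  show ?thesis unfolding mod_length_def eq
  proof (rule cSup_eq_maximum)
    show "card (vs v M - vs v N) \<in> {k. \<exists>C. chain R N M k C}"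
      using chain_ex[OF N RN] M NM MRb by blast
    show "\<And>x. x \<in> {k. \<exists>C. chain R N M k C} \<Longrightarrow> x \<le> card (vs v M - vs v N)"
      using chain_le[OF N RN MRb] by blast
  qed
qed

lemma Rb_add: assumes "x \<in> Rb" "y \<in> Rb" shows "x + y \<in> Rb"
proof (cases "x = 0 \<or> y = 0 \<or> x + y = 0")
  case True then show ?thesis using assms by (auto simp: Rb_iff)
next
  case False then show ?thesis using vadd[of x y] assms by (auto simp: Rb_iff)
qed

lemma Rb_mult: assumes "x \<in> Rb" "y \<in> Rb" shows "x * y \<in> Rb"
proof (cases "x = 0 \<or> y = 0")
  case True then show ?thesis using assms by (auto simp: Rb_iff)
next
  case False then show ?thesis using vmult[of x y] assms by (auto simp: Rb_iff)
qed

lemma sm_Rb: "submod R Rb"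
  unfolding submod_def using Rb_add Rb_mult R_Rb by (auto simp: Rb_iff)

lemma sm_R: "submod R R"
  unfolding submod_def using R0 Radd Rmult by auto

abbreviation "SG \<equiv> value_semigroup R v"
abbreviation "cond \<equiv> conductor_val R v"
abbreviation "mlt \<equiv> multiplicity_val R v"
abbreviation "sq \<equiv> sg_elem R v"

lemma SG_vs: "SG = vs v R"
  by (simp add: vs_def value_semigroup_def)

lemma SG_nonneg: "w \<in> SG \<Longrightarrow> 0 \<le> w"
  unfolding value_semigroup_def using R_nonneg by auto

lemma SG0: "0 \<in> SG"
  unfolding value_semigroup_def using R1 v1 by force

lemma SG_add: assumes "a \<in> SG" "b \<in> SG" shows "a + b \<in> SG"
proof -
  obtain x where x: "x \<in> R" "x \<noteq> 0" "v x = a" using assms(1) unfolding value_semigroup_def by blast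
  obtain y where y: "y \<in> R" "y \<noteq> 0" "v y = b" using assms(2) unfolding value_semigroup_def by blast
  have "x * y \<in> R" "x * y \<noteq> 0" "v (x * y) = a + b" using x y Rmult vmult by auto
  then show ?thesis unfolding value_semigroup_def by (intro CollectI exI[of _ "x * y"]) simp
qed

lemma vs_Rb: "vs v Rb = {w. 0 \<le> w}"
proof
  show "vs v Rb \<subseteq> {w. 0 \<le> w}" unfolding vs_def by (auto simp: Rb_iff)
  show "{w. 0 \<le> w} \<subseteq> vs v Rb"
  proof
    fix w :: int assume "w \<in> {w. 0 \<le> w}"
    moreover obtain x where "x \<noteq> 0" "v x = w" using vval by blast
    ultimately show "w \<in> vs v Rb" unfolding vs_def by (force simp: Rb_iff)
  qed
qed

lemma SG_big: "\<exists>K. \<forall>w\<ge>K. w \<in> SG"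
proof -
  obtain K0 where K: "\<forall>x. x \<noteq> 0 \<and> K0 \<le> v x \<longrightarrow> x \<in> R" using K0_ex by blast
  have "w \<in> SG" if "w \<ge> K0" for w
  proof -
    obtain x where "x \<noteq> 0" "v x = w" using vval by blast
    then show ?thesis using K that unfolding value_semigroup_def by force
  qed
  then show ?thesis by blast
qed

lemma cond_props: "cond \<in> SG \<and> (\<forall>k::nat. cond + int k \<in> SG) \<and>
   (\<forall>y. y \<in> SG \<and> (\<forall>k::nat. y + int k \<in> SG) \<longrightarrow> cond \<le> y)"
proof -
  obtain K where K: "\<forall>w\<ge>K. w \<in> SG" using SG_big by blast
  define K' where "K' = max K 0"
  have P: "K' \<in> SG \<and> (\<forall>k::nat. K' + int k \<in> SG)" using K K'_def by auto
  have nn: "\<forall>x. x \<in> SG \<and> (\<forall>k::nat. x + int k \<in> SG) \<longrightarrow> 0 \<le> x" using SG_nonneg by blast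
  from int_least[OF P nn] show ?thesis unfolding conductor_val_def by (elim conjE) (intro conjI; assumption)
qed

lemma cond_SG: "cond \<in> SG" using cond_props by (rule conjunct1)
lemma cond_ge: assumes "cond \<le> w" shows "w \<in> SG"
proof -
  have "\<forall>k::nat. cond + int k \<in> SG" using cond_props by (rule conjunct2[THEN conjunct1])
  then have "cond + int (nat (w - cond)) \<in> SG" by (rule spec)
  then show ?thesis using assms by simp
qed
lemma cond_nonneg: "0 \<le> cond" using cond_SG SG_nonneg by blast
lemma cond_min: "y \<in> SG \<Longrightarrow> (\<forall>k::nat. y + int k \<in> SG) \<Longrightarrow> cond \<le> y"
  using cond_props[THEN conjunct2, THEN conjunct2] by blast

lemma cond_m1: "cond - 1 \<notin> SG"
proof
  assume a: "cond - 1 \<in> SG"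
  have "\<forall>k::nat. cond - 1 + int k \<in> SG"
  proof
    fix k :: nat show "cond - 1 + int k \<in> SG"
      using a cond_ge[of "cond - 1 + int k"] by (cases k) auto
  qed
  then have "cond \<le> cond - 1" using cond_min a by blast
  then show False by simp
qed

lemma cond_R: assumes "x \<noteq> 0" "cond \<le> v x" shows "x \<in> R"
proof -
  define M where "M = {y + z | y z. y \<in> R \<and> (z = 0 \<or> (z \<noteq> 0 \<and> cond \<le> v z))}"
  have Msub: "submod R M" unfolding submod_def
  proof (intro conjI ballI)
    show "0 \<in> M" unfolding M_def using R0 by force
  next
    fix p q assume "p \<in> M" "q \<in> M"
    then obtain y1 z1 y2 z2 where yz: "p = y1 + z1" "y1 \<in> R" "z1 = 0 \<or> (z1 \<noteq> 0 \<and> cond \<le> v z1)"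
      "q = y2 + z2" "y2 \<in> R" "z2 = 0 \<or> (z2 \<noteq> 0 \<and> cond \<le> v z2)" unfolding M_def by blast
    have "z1 + z2 = 0 \<or> (z1 + z2 \<noteq> 0 \<and> cond \<le> v (z1 + z2))"
    proof (cases "z1 = 0 \<or> z2 = 0 \<or> z1 + z2 = 0")
      case True then show ?thesis using yz by auto
    next
      case False then show ?thesis using vadd[of z1 z2] yz by auto
    qed
    moreover have "p + q = (y1 + y2) + (z1 + z2)" using yz by simp
    ultimately show "p + q \<in> M" unfolding M_def using Radd yz by blast
  next
    fix a p assume a: "a \<in> R" and "p \<in> M"
    then obtain y z where yz: "p = y + z" "y \<in> R" "z = 0 \<or> (z \<noteq> 0 \<and> cond \<le> v z)" unfolding M_def by blast
    have "a * z = 0 \<or> (a * z \<noteq> 0 \<and> cond \<le> v (a * z))"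
    proof (cases "a = 0 \<or> z = 0")
      case True then show ?thesis by auto
    next
      case False then show ?thesis using vmult[of a z] R_nonneg[OF a] yz by auto
    qed
    moreover have "a * p = a * y + a * z" using yz by (simp add: algebra_simps)
    ultimately show "a * p \<in> M" unfolding M_def using Rmult a yz by blast
  qed
  have RM: "R \<subseteq> M" unfolding M_def by force
  have MRb: "M \<subseteq> Rb"
  proof
    fix p assume "p \<in> M"
    then obtain y z where yz: "p = y + z" "y \<in> R" "z = 0 \<or> (z \<noteq> 0 \<and> cond \<le> v z)" unfolding M_def by blast
    have "z \<in> Rb" using yz cond_nonneg by (auto simp: Rb_iff)
    then show "p \<in> Rb" using yz R_Rb Rb_add by blast
  qed
  have vsM: "vs v M \<subseteq> vs v R"
  proof
    fix w assume "w \<in> vs v M"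
    then obtain p where p: "p \<in> M" "p \<noteq> 0" "w = v p" unfolding vs_def by blast
    then obtain y z where yz: "p = y + z" "y \<in> R" "z = 0 \<or> (z \<noteq> 0 \<and> cond \<le> v z)" unfolding M_def by blast
    have "w \<in> SG"
    proof (cases "z = 0")
      case True then show ?thesis using p yz unfolding value_semigroup_def by auto
    next
      case z0: False
      show ?thesis
      proof (cases "y = 0")
        case True then show ?thesis using p yz z0 cond_ge by simp
      next
        case y0: False
        have "v p = v y \<and> v y < v z \<or> v p = v z \<and> v z < v y \<or> (v y = v z \<and> v y \<le> v p)"
          using vsum_cases[OF y0 z0] p yz by simp
        moreover have "v y \<in> SG" using yz y0 unfolding value_semigroup_def by blast
        ultimately show ?thesis using p yz z0 cond_ge by auto
      qed
    qed
    then show "w \<in> vs v R" using SG_vs by simp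
  qed
  have "R = M" using eq_of_vs[OF sm_R Msub RM MRb order_refl vsM] .
  moreover have "x = 0 + x" by simp
  then have "x \<in> M" unfolding M_def using assms R0 by blast
  ultimately show ?thesis by simp
qed

lemma inv_in_R: assumes a: "a \<in> R" "a \<noteq> 0" "v a = 0" shows "inverse a \<in> R"
proof -
  define y where "y = inverse a"
  have ya: "y * a = 1" using a y_def by simp
  have "y \<in> int_closure R" using ic vinv[of a] a y_def by (simp add: Rb_iff)
  then obtain n b where nb: "n > 0" "\<forall>i<n. b i \<in> R" "y ^ n + (\<Sum>i<n. b i * y ^ i) = 0"
    unfolding int_closure_def by blast
  have key: "y ^ i * a ^ (n - 1) = a ^ (n - 1 - i)" if "i < n" for i
  proof -
    have "a ^ (n - 1) = a ^ i * a ^ (n - 1 - i)" using that by (simp add: power_add[symmetric])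
    then have "y ^ i * a ^ (n - 1) = (y * a) ^ i * a ^ (n - 1 - i)" by (simp add: power_mult_distrib mult.assoc)
    then show ?thesis using ya by simp
  qed
  have yn: "y ^ n * a ^ (n - 1) = y"
  proof -
    have yy: "y ^ n = y * y ^ (n - 1)" using nb(1) by (cases n) auto
    have one: "y ^ (n - 1) * a ^ (n - 1) = 1" using ya by (simp add: power_mult_distrib[symmetric])
    have "y ^ n * a ^ (n - 1) = y * (y ^ (n - 1) * a ^ (n - 1))" by (subst yy) (simp only: mult.assoc)
    also have "\<dots> = y" by (simp only: one mult_1_right)
    finally show ?thesis .
  qed
  have "0 = (y ^ n + (\<Sum>i<n. b i * y ^ i)) * a ^ (n - 1)" using nb by simp
  also have "\<dots> = y + (\<Sum>i<n. b i * (y ^ i * a ^ (n - 1)))"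
    unfolding distrib_right sum_distrib_right yn by (simp add: mult.assoc)
  also have "\<dots> = y + (\<Sum>i<n. b i * a ^ (n - 1 - i))" using key by simp
  finally have "y = - (\<Sum>i<n. b i * a ^ (n - 1 - i))" by (simp add: eq_neg_iff_add_eq_0)
  moreover have "(\<Sum>i<n. b i * a ^ (n - 1 - i)) \<in> R"
  proof (rule Rsum)
    fix i assume "i \<in> {..<n}"
    moreover have "a ^ k \<in> R" for k by (induction k) (auto simp: R1 Rmult a)
    ultimately show "b i * a ^ (n - 1 - i) \<in> R" using nb Rmult by blast
  qed simp
  ultimately show ?thesis using Rneg y_def by simp
qed

lemma maxideal_char: "maxideal R = {a \<in> R. a = 0 \<or> 0 < v a}"
proof -
  have "inverse a \<notin> R \<longleftrightarrow> 0 < v a" if a: "a \<in> R" "a \<noteq> 0" for a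
  proof
    assume "inverse a \<notin> R"
    then show "0 < v a" using inv_in_R[OF a] R_nonneg[OF a] by force
  next
    assume "0 < v a"
    then have "inverse a \<notin> Rb" using vinv[OF a(2)] a by (simp add: Rb_iff)
    then show "inverse a \<notin> R" using R_Rb by blast
  qed
  then show ?thesis unfolding maxideal_def by auto
qed

lemma cond_pos: "0 < cond"
proof (rule ccontr)
  assume "\<not> 0 < cond"
  then have c0: "cond = 0" using cond_nonneg by simp
  have RbR: "Rb \<subseteq> R"
  proof
    fix x assume "x \<in> Rb"
    then show "x \<in> R" using cond_R[of x] c0 R0 by (cases "x = 0") (auto simp: Rb_iff)
  qed
  obtain t where t: "t \<noteq> 0" "v t = 1" using vval by blast
  have tR: "t \<in> R" using t RbR by (simp add: Rb_iff subset_iff)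
  have "maxideal R = {t * a | a. a \<in> R}"
  proof
    show "maxideal R \<subseteq> {t * a | a. a \<in> R}"
    proof
      fix z assume "z \<in> maxideal R"
      then have z: "z \<in> R" "z = 0 \<or> 0 < v z" using maxideal_char by auto
      have "z / t \<in> Rb" using z vdiv[of z t] t by (cases "z = 0") (auto simp: Rb_iff)
      then have "z / t \<in> R" using RbR by blast
      moreover have "z = t * (z / t)" using t by simp
      ultimately show "z \<in> {t * a | a. a \<in> R}" by blast
    qed
    show "{t * a | a. a \<in> R} \<subseteq> maxideal R"
    proof
      fix z assume "z \<in> {t * a | a. a \<in> R}"
      then obtain a where a: "a \<in> R" "z = t * a" by blast
      have "z \<in> R" using a tR Rmult by simp
      moreover have "z = 0 \<or> 0 < v z" using a vmult[of t a] t R_nonneg[OF a(1)] by (cases "a = 0") auto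
      ultimately show "z \<in> maxideal R" using maxideal_char by simp
    qed
  qed
  then show False using nreg tR unfolding regular_local_def by blast
qed

lemma mlt_props: "mlt \<in> SG \<and> 0 < mlt \<and> (\<forall>y. y \<in> SG \<and> 0 < y \<longrightarrow> mlt \<le> y)"
proof -
  have P: "cond \<in> SG \<and> 0 < cond" using cond_SG cond_pos by simp
  have nn: "\<forall>x. x \<in> SG \<and> 0 < x \<longrightarrow> 0 \<le> x" by simp
  from int_least[OF P nn] show ?thesis unfolding multiplicity_val_def by (elim conjE) (intro conjI; assumption)
qed

lemma sq_step: "sq i \<in> SG \<Longrightarrow> sq (Suc i) \<in> SG \<and> sq i < sq (Suc i) \<and> (\<forall>y. y \<in> SG \<and> sq i < y \<longrightarrow> sq (Suc i) \<le> y)"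
proof -
  assume si: "sq i \<in> SG"
  have P: "max (sq i + 1) cond \<in> SG \<and> sq i < max (sq i + 1) cond" using cond_ge by simp
  have nn: "\<forall>x. x \<in> SG \<and> sq i < x \<longrightarrow> 0 \<le> x" using SG_nonneg by blast
  from int_least[OF P nn] show ?thesis by simp
qed

lemma sq_SG: "sq i \<in> SG"
proof (induction i)
  case 0 show ?case by (simp add: SG0)
next
  case (Suc i) then show ?case using sq_step by blast
qed

lemma sq_lt: "sq i < sq (Suc i)" using sq_step[OF sq_SG] by blast
lemma sq_least: "y \<in> SG \<Longrightarrow> sq i < y \<Longrightarrow> sq (Suc i) \<le> y" using sq_step[OF sq_SG] by blast

lemma sq_mono: "i < j \<Longrightarrow> sq i < sq j"
  using lift_Suc_mono_less[of sq i j] sq_lt by blast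

lemma sq_mono_le: "i \<le> j \<Longrightarrow> sq i \<le> sq j"
  using sq_mono[of i j] by (cases "i = j") auto

lemma sq_card: "card (SG \<inter> {0..<sq i}) = i"
proof (induction i)
  case 0 then show ?case by simp
next
  case (Suc i)
  have eq: "SG \<inter> {0..<sq (Suc i)} = insert (sq i) (SG \<inter> {0..<sq i})"
  proof
    show "SG \<inter> {0..<sq (Suc i)} \<subseteq> insert (sq i) (SG \<inter> {0..<sq i})"
    proof
      fix x assume x: "x \<in> SG \<inter> {0..<sq (Suc i)}"
      have "\<not> sq i < x" using sq_least[of x i] x by auto
      then show "x \<in> insert (sq i) (SG \<inter> {0..<sq i})" using x by auto
    qed
    show "insert (sq i) (SG \<inter> {0..<sq i}) \<subseteq> SG \<inter> {0..<sq (Suc i)}"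
      using sq_SG[of i] SG_nonneg[of "sq i"] sq_lt[of i] by auto
  qed
  then show ?case using Suc by simp
qed

definition n0 where "n0 = card (SG \<inter> {0..<cond})"

lemma sq_n0: "sq n0 = cond"
proof -
  have fin: "finite (SG \<inter> {0..<x})" for x by simp
  consider "sq n0 < cond" | "cond < sq n0" | "sq n0 = cond" by linarith
  then show ?thesis
  proof cases
    case 1
    have "insert (sq n0) (SG \<inter> {0..<sq n0}) \<subseteq> SG \<inter> {0..<cond}"
      using 1 sq_SG[of n0] SG_nonneg[of "sq n0"] by auto
    then have "card (insert (sq n0) (SG \<inter> {0..<sq n0})) \<le> n0" unfolding n0_def
      by (rule card_mono[OF fin])
    then show ?thesis using sq_card[of n0] by simp
  next
    case 2
    have "insert cond (SG \<inter> {0..<cond}) \<subseteq> SG \<inter> {0..<sq n0}"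
      using 2 cond_SG cond_nonneg by auto
    then have "card (insert cond (SG \<inter> {0..<cond})) \<le> n0" using sq_card[of n0]
      by (metis card_mono fin)
    then show ?thesis unfolding n0_def by simp
  qed
qed

lemma sq_at: assumes xS: "x \<in> SG" shows "sq (card (SG \<inter> {0..<x})) = x"
proof -
  define k where "k = card (SG \<inter> {0..<x})"
  have fin: "finite (SG \<inter> {0..<y})" for y by simp
  consider "sq k < x" | "x < sq k" | "sq k = x" by linarith
  then show ?thesis
  proof cases
    case 1
    have "insert (sq k) (SG \<inter> {0..<sq k}) \<subseteq> SG \<inter> {0..<x}"
      using 1 sq_SG[of k] SG_nonneg[of "sq k"] by auto
    then have "card (insert (sq k) (SG \<inter> {0..<sq k})) \<le> k" unfolding k_def
      by (rule card_mono[OF fin])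
    then show ?thesis using sq_card[of k] by simp
  next
    case 2
    have "insert x (SG \<inter> {0..<x}) \<subseteq> SG \<inter> {0..<sq k}"
      using 2 xS SG_nonneg[OF xS] by auto
    then have "card (insert x (SG \<inter> {0..<x})) \<le> k" using sq_card[of k]
      by (metis card_mono fin)
    then show ?thesis unfolding k_def by simp
  qed (simp add: k_def)
qed

lemma sq_le_cond: "i \<le> n0 \<Longrightarrow> sq i \<le> cond"
  using sq_mono_le[of i n0] sq_n0 by simp

lemma n0_pos: "0 < n0"
proof -
  have "0 \<in> SG \<inter> {0..<cond}" using SG0 cond_pos by simp
  then show ?thesis unfolding n0_def by (metis card_gt_0_iff empty_iff finite_Int finite_atLeastLessThan_int)
qed

lemma sq1: "sq 1 = mlt"
  by (simp add: multiplicity_val_def)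

lemma cond_split: "cond = int n0 + int (card ({0..<cond} - SG))"
proof -
  have "{0..<cond} = (SG \<inter> {0..<cond}) \<union> ({0..<cond} - SG)" by auto
  then have "card {0..<cond} = card (SG \<inter> {0..<cond}) + card ({0..<cond} - SG)"
    by (metis card_Un_disjoint Diff_disjoint Int_Diff_disjoint Int_commute finite_Diff finite_Int finite_atLeastLessThan_int)
  then show ?thesis unfolding n0_def using cond_nonneg by simp
qed

lemma delta_eq: "delta_inv R = int (card ({0..<cond} - SG))"
proof -
  have "mod_length R Rb R = card (vs v Rb - vs v R)"
    using len[OF sm_R sm_Rb _ order_refl order_refl] R_Rb by blast
  moreover have "vs v Rb - vs v R = {0..<cond} - SG"
  proof
    show "vs v Rb - vs v R \<subseteq> {0..<cond} - SG"
    proof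
      fix x assume x: "x \<in> vs v Rb - vs v R"
      then have "\<not> cond \<le> x" using cond_ge SG_vs by blast
      then show "x \<in> {0..<cond} - SG" using x vs_Rb SG_vs by auto
    qed
    show "{0..<cond} - SG \<subseteq> vs v Rb - vs v R" using vs_Rb SG_vs by auto
  qed
  ultimately show ?thesis unfolding delta_inv_def using ic by simp
qed

lemma nlen: "nat (cond - delta_inv R) = n0"
  using cond_split delta_eq by simp

lemma sm_colon: "submod R (colon R X)"
  unfolding submod_def colon_def using R0 Radd Rmult by (auto simp: distrib_right mult.assoc)

lemma R_colon: "X \<subseteq> R \<Longrightarrow> R \<subseteq> colon R X"
  unfolding colon_def using Rmult by blast

lemma colon_R: "colon R R = R"
proof
  show "colon R R \<subseteq> R" unfolding colon_def using R1 by force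
  show "R \<subseteq> colon R R" using R_colon by blast
qed

lemma colon_anti: "X \<subseteq> Y \<Longrightarrow> colon R Y \<subseteq> colon R X"
  unfolding colon_def by blast

lemma RI_def: "val_ideal R v i = {a \<in> R. a = 0 \<or> sq i \<le> v a}"
  by (simp add: val_ideal_def)

lemma RI_sub: "val_ideal R v i \<subseteq> R" unfolding val_ideal_def by blast

lemma RI_anti: "i \<le> j \<Longrightarrow> val_ideal R v j \<subseteq> val_ideal R v i"
  unfolding val_ideal_def using sq_mono_le[of i j] by auto

lemma RI0: "val_ideal R v 0 = R"
  unfolding val_ideal_def using R_nonneg by auto

lemma RI1: "val_ideal R v 1 = maxideal R"
proof -
  have "a \<in> R \<Longrightarrow> a \<noteq> 0 \<Longrightarrow> 0 < v a \<Longrightarrow> mlt \<le> v a" for a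
    using mlt_props unfolding value_semigroup_def by blast
  then show ?thesis unfolding val_ideal_def maxideal_char sq1 using mlt_props by force
qed

lemma colon_Rb: assumes "\<And>x. x \<noteq> 0 \<Longrightarrow> cond \<le> v x \<Longrightarrow> x \<in> X" shows "colon R X \<subseteq> Rb"
proof
  fix x assume x: "x \<in> colon R X"
  show "x \<in> Rb"
  proof (rule ccontr)
    assume "x \<notin> Rb"
    then have x0: "x \<noteq> 0" and neg: "v x < 0" by (auto simp: Rb_iff)
    obtain y where y: "y \<noteq> 0" "v y = cond - 1 - v x" using vval by blast
    have "y \<in> X" using assms y neg by simp
    then have "x * y \<in> R" using x unfolding colon_def by blast
    moreover have "v (x * y) = cond - 1" using vmult[OF x0 y(1)] y by simp
    ultimately have "cond - 1 \<in> SG" using x0 y unfolding value_semigroup_def by force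
    then show False using cond_m1 by simp
  qed
qed

lemma colon_RI_Rb: "i \<le> n0 \<Longrightarrow> colon R (val_ideal R v i) \<subseteq> Rb"
  by (rule colon_Rb) (use cond_R sq_le_cond in \<open>force simp: val_ideal_def\<close>)

lemma colon_n0: "colon R (val_ideal R v n0) = Rb"
proof
  show "colon R (val_ideal R v n0) \<subseteq> Rb" using colon_RI_Rb by simp
  show "Rb \<subseteq> colon R (val_ideal R v n0)"
  proof
    fix x assume x: "x \<in> Rb"
    have "x * y \<in> R" if y: "y \<in> val_ideal R v n0" for y
    proof (cases "x = 0 \<or> y = 0")
      case True then show ?thesis using R0 by auto
    next
      case False
      then have "cond \<le> v (x * y)" using vmult[of x y] x y sq_n0 by (auto simp: Rb_iff val_ideal_def)
      then show ?thesis using cond_R False by simp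
    qed
    then show "x \<in> colon R (val_ideal R v n0)" unfolding colon_def by blast
  qed
qed

abbreviation "AA i \<equiv> colon R (val_ideal R v i)"

lemma AA_mono: "i \<le> j \<Longrightarrow> AA i \<subseteq> AA j"
  by (rule colon_anti[OF RI_anti])

lemma R_AA: "R \<subseteq> AA i" using R_colon[OF RI_sub] .

lemma AA0: "AA 0 = R" using RI0 colon_R by simp

lemma typ_eq: "cm_type R = int (card (vs v (AA 1) - SG))"
proof -
  have "mod_length R (AA 1) R = card (vs v (AA 1) - vs v R)"
    using len[OF sm_R sm_colon R_AA colon_RI_Rb order_refl] n0_pos by simp
  then show ?thesis unfolding cm_type_def using RI1 SG_vs by simp
qed

lemma tst_eq: assumes "1 \<le> i" "i \<le> n0"
  shows "type_seq_term R v i = int (card (vs v (AA i) - vs v (AA (i - 1))))"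
proof -
  have "mod_length R (AA i) (AA (i - 1)) = card (vs v (AA i) - vs v (AA (i - 1)))"
    using len[OF sm_colon sm_colon AA_mono colon_RI_Rb R_AA] assms by simp
  then show ?thesis unfolding type_seq_term_def by simp
qed

lemma u_ex: "\<exists>u. u \<in> R \<and> u \<noteq> 0 \<and> v u = sq i"
proof -
  obtain a where "a \<in> R" "a \<noteq> 0" "sq i = v a" using sq_SG[of i] unfolding value_semigroup_def by blast
  then show ?thesis by (intro exI[of _ a]) simp
qed

lemma u_RI: "u \<in> R \<Longrightarrow> v u = sq i \<Longrightarrow> u \<in> val_ideal R v i"
  unfolding val_ideal_def by simp

lemma RI_val: "a \<in> R \<Longrightarrow> a \<noteq> 0 \<Longrightarrow> sq (i - 1) < v a \<Longrightarrow> 1 \<le> i \<Longrightarrow> a \<in> val_ideal R v i"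
  using sq_least[of "v a" "i - 1"] unfolding val_ideal_def value_semigroup_def by force

lemma decomp:
  assumes i: "1 \<le> i" and u: "u \<in> R" "u \<noteq> 0" "v u = sq (i - 1)" and y: "y \<in> val_ideal R v (i - 1)"
  shows "\<exists>a\<in>R. y - a * u \<in> val_ideal R v i"
proof (cases "y = 0 \<or> sq (i - 1) < v y")
  case True
  have "y \<in> val_ideal R v i"
  proof (cases "y = 0")
    case True then show ?thesis using R0 unfolding val_ideal_def by simp
  next
    case False then show ?thesis using \<open>y = 0 \<or> sq (i - 1) < v y\<close> y RI_val[of y i] i RI_sub by blast
  qed
  then show ?thesis using R0 by force
next
  case False
  then have y0: "y \<noteq> 0" and vy: "v y = sq (i - 1)" using y unfolding val_ideal_def by auto
  have yR: "y \<in> R" using y RI_sub by blast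
  have vq: "v (y / u) = 0" using vdiv[OF y0 u(2)] vy u by simp
  then have q: "y / u \<in> Rb" by (simp add: Rb_iff)
  obtain a where a: "a \<in> R" "y / u - a \<in> val_maxideal v"
    using rr ic q unfolding residually_rational_def by auto
  have eq: "y - a * u = u * (y / u - a)" using u(2) by (simp add: field_simps)
  have yaR: "y - a * u \<in> R" using Rdiff yR Rmult a u by blast
  have "y - a * u \<in> val_ideal R v i"
  proof (cases "y / u - a = 0")
    case True then have "y - a * u = 0" using eq by simp
    then show ?thesis using R0 unfolding val_ideal_def by simp
  next
    case False
    then have "0 < v (y / u - a)" using a unfolding val_maxideal_def by simp
    moreover have "v (y - a * u) = v u + v (y / u - a)" using eq vmult[OF u(2) False] by simp
    ultimately have "sq (i - 1) < v (y - a * u)" using u by simp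
    moreover have "y - a * u \<noteq> 0" using eq False u by simp
    ultimately show ?thesis using RI_val yaR i by blast
  qed
  then show ?thesis using a by blast
qed

lemma kernel:
  assumes i: "1 \<le> i" and u: "u \<in> R" "u \<noteq> 0" "v u = sq (i - 1)"
    and x: "x \<in> AA i" and ux: "u * x \<in> R"
  shows "x \<in> AA (i - 1)"
  unfolding colon_def
proof (intro CollectI ballI)
  fix y assume y: "y \<in> val_ideal R v (i - 1)"
  obtain a where a: "a \<in> R" "y - a * u \<in> val_ideal R v i" using decomp[OF i u y] by blast
  have "x * (y - a * u) \<in> R" using x a unfolding colon_def by blast
  moreover have "a * (u * x) \<in> R" using Rmult a ux by blast
  moreover have "x * y = x * (y - a * u) + a * (u * x)" by (simp add: algebra_simps)
  ultimately show "x * y \<in> R" using Radd by simp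
qed

lemma uz_RI:
  assumes i: "1 \<le> i" and u: "u \<in> R" "u \<noteq> 0" "v u = sq (i - 1)" and z: "z \<in> maxideal R"
  shows "u * z \<in> val_ideal R v i"
proof (cases "z = 0")
  case True then show ?thesis using R0 unfolding val_ideal_def by simp
next
  case False
  have zR: "z \<in> R" "0 < v z" using z False maxideal_char by auto
  have "v (u * z) = v u + v z" using vmult[OF u(2) False] .
  then show ?thesis using RI_val[of "u * z" i] Rmult[OF u(1) zR(1)] u False zR i by simp
qed

definition DD :: "'k \<Rightarrow> 'k set \<Rightarrow> 'k set" where
  "DD u X = {u * x + a | x a. x \<in> X \<and> a \<in> R}"

lemma sm_DD: "submod R X \<Longrightarrow> submod R (DD u X)"
  unfolding submod_def
proof (intro conjI ballI)
  assume X: "0 \<in> X \<and> (\<forall>x\<in>X. \<forall>y\<in>X. x + y \<in> X) \<and> (\<forall>a\<in>R. \<forall>x\<in>X. a * x \<in> X)"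
  show "0 \<in> DD u X" unfolding DD_def using X R0 by force
  fix p q assume "p \<in> DD u X" "q \<in> DD u X"
  then obtain x1 a1 x2 a2 where xa: "p = u * x1 + a1" "x1 \<in> X" "a1 \<in> R" "q = u * x2 + a2" "x2 \<in> X" "a2 \<in> R"
    unfolding DD_def by blast
  have "p + q = u * (x1 + x2) + (a1 + a2)" using xa by (simp add: algebra_simps)
  then show "p + q \<in> DD u X" unfolding DD_def using X xa Radd by blast
next
  assume X: "0 \<in> X \<and> (\<forall>x\<in>X. \<forall>y\<in>X. x + y \<in> X) \<and> (\<forall>a\<in>R. \<forall>x\<in>X. a * x \<in> X)"
  fix b p assume b: "b \<in> R" and "p \<in> DD u X"
  then obtain x a where xa: "p = u * x + a" "x \<in> X" "a \<in> R" unfolding DD_def by blast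
  have "b * p = u * (b * x) + b * a" using xa by (simp add: algebra_simps)
  then show "b * p \<in> DD u X" unfolding DD_def using X xa b Rmult by blast
qed

lemma DD_mono: "X \<subseteq> Y \<Longrightarrow> DD u X \<subseteq> DD u Y"
  unfolding DD_def by blast

lemma R_DD: "0 \<in> X \<Longrightarrow> R \<subseteq> DD u X"
proof
  fix a assume "0 \<in> X" "a \<in> R"
  moreover have "a = u * 0 + a" by simp
  ultimately show "a \<in> DD u X" unfolding DD_def by blast
qed

lemma DD_AA1:
  assumes i: "1 \<le> i" "i \<le> n0" and u: "u \<in> R" "u \<noteq> 0" "v u = sq (i - 1)"
  shows "DD u (AA i) \<subseteq> AA 1"
proof
  fix p assume "p \<in> DD u (AA i)"
  then obtain x a where xa: "p = u * x + a" "x \<in> AA i" "a \<in> R" unfolding DD_def by blast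
  have "p * z \<in> R" if z: "z \<in> val_ideal R v 1" for z
  proof -
    have zm: "z \<in> maxideal R" using z RI1 by simp
    have "x * (u * z) \<in> R" using xa uz_RI[OF i(1) u zm] unfolding colon_def by blast
    moreover have "a * z \<in> R" using Rmult xa zm maxideal_char by auto
    moreover have "p * z = x * (u * z) + a * z" using xa by (simp add: algebra_simps)
    ultimately show ?thesis using Radd by simp
  qed
  then show "p \<in> AA 1" unfolding colon_def by blast
qed

lemma AA1_Rb: "AA 1 \<subseteq> Rb" using colon_RI_Rb n0_pos by simp

lemma chain_map:
  assumes i: "1 \<le> i" "i \<le> n0" and u: "u \<in> R" "u \<noteq> 0" "v u = sq (i - 1)"
  shows "card (vs v (AA i) - vs v (AA (i - 1))) \<le> card (vs v (DD u (AA i)) - SG)"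
proof -
  define k where "k = card (vs v (AA i) - vs v (AA (i - 1)))"
  have "\<exists>C. chain R (AA (i - 1)) (AA i) k C"
    using chain_ex[OF sm_colon[of "val_ideal R v (i - 1)"] R_AA[of "i - 1"], of k]
      sm_colon[of "val_ideal R v i"] AA_mono[of "i - 1" i, OF diff_le_self] colon_RI_Rb[OF i(2)] k_def by blast
  then obtain C where C: "chain R (AA (i - 1)) (AA i) k C" by blast
  have Cs: "submod R (C j)" if "j \<le> k" for j using C that unfolding chain_def by blast
  have CAA: "C j \<subseteq> AA i" if "j \<le> k" for j using chain_mono[OF C, of j k] C that unfolding chain_def by simp
  have C0: "AA (i - 1) \<subseteq> C j" if "j \<le> k" for j using chain_mono[OF C, of 0 j] C that unfolding chain_def by simp
  define E where "E = (\<lambda>j. DD u (C j))"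
  have "chain R R (E k) k E" unfolding chain_def
  proof (intro conjI allI impI)
    show "E 0 = R"
    proof
      show "E 0 \<subseteq> R"
      proof
        fix p assume "p \<in> E 0"
        then obtain x a where xa: "p = u * x + a" "x \<in> AA (i - 1)" "a \<in> R"
          unfolding E_def DD_def using C unfolding chain_def by auto
        have "x * u \<in> R" using xa u_RI[OF u(1) u(3)] unfolding colon_def by blast
        then show "p \<in> R" using xa Radd by (simp add: mult.commute)
      qed
      show "R \<subseteq> E 0" unfolding E_def by (rule R_DD) (use sm_zero[OF Cs[of 0]] in simp)
    qed
    show "E k = E k" by simp
    fix j
    show "j \<le> k \<Longrightarrow> submod R (E j)" unfolding E_def using sm_DD Cs by blast
    assume jk: "j < k"
    have sub: "C j \<subset> C (Suc j)" using C jk unfolding chain_def by blast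
    then obtain x where x: "x \<in> C (Suc j)" "x \<notin> C j" by blast
    have "E j \<subseteq> E (Suc j)" unfolding E_def using DD_mono sub by blast
    moreover have "u * x \<notin> E j"
    proof
      assume "u * x \<in> E j"
      then obtain x' a where xa: "u * x = u * x' + a" "x' \<in> C j" "a \<in> R" unfolding E_def DD_def by blast
      have "u * (x - x') \<in> R" using xa by (simp add: algebra_simps)
      moreover have "x - x' \<in> AA i"
      proof -
        have "x \<in> AA i" "x' \<in> AA i" using CAA[of "Suc j"] CAA[of j] x xa jk by auto
        then show ?thesis using sm_diff[OF sm_colon] by blast
      qed
      ultimately have "x - x' \<in> AA (i - 1)" using kernel[OF i(1) u] by blast
      then have "x - x' \<in> C j" using C0[of j] jk by (meson less_imp_le subsetD)
      then have "(x - x') + x' \<in> C j" using sm_add[OF Cs[of j], of "x - x'" x'] xa jk by simp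
      then show False using x by simp
    qed
    moreover have "u * x \<in> E (Suc j)"
    proof -
      have "u * x = u * x + 0" by simp
      then show ?thesis unfolding E_def DD_def using x R0 by blast
    qed
    ultimately show "E j \<subset> E (Suc j)" by blast
  qed
  moreover have Ek: "E k = DD u (AA i)" unfolding E_def using C unfolding chain_def by simp
  moreover have "DD u (AA i) \<subseteq> Rb" using DD_AA1[OF i u] AA1_Rb by blast
  ultimately have "k \<le> card (vs v (DD u (AA i)) - vs v R)"
    using chain_le[OF sm_R order_refl] by metis
  then show ?thesis unfolding k_def using SG_vs by simp
qed

lemma DD_le_typ:
  assumes i: "1 \<le> i" "i \<le> n0" and u: "u \<in> R" "u \<noteq> 0" "v u = sq (i - 1)"
  shows "card (vs v (DD u (AA i)) - SG) \<le> card (vs v (AA 1) - SG)"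
proof -
  have "finite (vs v (AA 1) - SG)" using fin_diff[OF AA1_Rb order_refl] SG_vs by simp
  moreover have "vs v (DD u (AA i)) - SG \<subseteq> vs v (AA 1) - SG" using vs_mono[OF DD_AA1[OF i u]] by blast
  ultimately show ?thesis by (rule card_mono)
qed

lemma tst_pos:
  assumes i: "1 \<le> i" "i \<le> n0"
  shows "1 \<le> card (vs v (AA i) - vs v (AA (i - 1)))"
proof -
  obtain u where u: "u \<in> R" "u \<noteq> 0" "v u = sq (i - 1)" using u_ex by blast
  obtain x where x: "x \<noteq> 0" "v x = cond - 1 - sq (i - 1)" using vval by blast
  have lt: "sq (i - 1) < sq i" using sq_mono[of "i - 1" i] i by simp
  have xA: "x \<in> AA i" unfolding colon_def
  proof (intro CollectI ballI)
    fix y assume y: "y \<in> val_ideal R v i"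
    show "x * y \<in> R"
    proof (cases "y = 0")
      case True then show ?thesis using R0 by simp
    next
      case False
      then have "sq i \<le> v y" using y unfolding val_ideal_def by simp
      then have "cond \<le> v (x * y)" using vmult[OF x(1) False] x lt by simp
      then show ?thesis using cond_R x False by simp
    qed
  qed
  have xnA: "x \<notin> AA (i - 1)"
  proof
    assume "x \<in> AA (i - 1)"
    then have "x * u \<in> R" using u_RI[OF u(1) u(3)] unfolding colon_def by blast
    moreover have "v (x * u) = cond - 1" using vmult[OF x(1) u(2)] x u by simp
    ultimately have "cond - 1 \<in> SG" using x u unfolding value_semigroup_def by force
    then show False using cond_m1 by simp
  qed
  have "AA (i - 1) \<noteq> AA i" using xA xnA by blast
  then obtain w where w: "w \<in> vs v (AA i)" "w \<notin> vs v (AA (i - 1))"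
    using sep[OF sm_colon sm_colon AA_mono[of "i - 1" i, OF diff_le_self] colon_RI_Rb[OF i(2)] R_AA] by blast
  have "finite (vs v (AA i) - vs v (AA (i - 1)))" using fin_diff[OF colon_RI_Rb[OF i(2)] R_AA] .
  then show ?thesis using w by (metis Diff_iff card_0_eq empty_iff less_one not_le)
qed

lemma mult_SG: "int k * mlt \<in> SG"
proof (induction k)
  case 0 then show ?case using SG0 by simp
next
  case (Suc k)
  have "int (Suc k) * mlt = int k * mlt + mlt" by (simp add: algebra_simps)
  then show ?case using SG_add[OF Suc mlt_props[THEN conjunct1]] by simp
qed

lemma mult_SG': "0 \<le> k \<Longrightarrow> k * mlt \<in> SG"
  using mult_SG[of "nat k"] by simp

lemma typ_le: "int (card (vs v (AA 1) - SG)) \<le> mlt - 1"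
proof -
  define W where "W = vs v (AA 1) - SG"
  have me: "0 < mlt" "mlt \<in> SG" using mlt_props by auto
  obtain y where y: "y \<in> R" "y \<noteq> 0" "mlt = v y" using me(2) unfolding value_semigroup_def by blast
  have ym: "y \<in> val_ideal R v 1" using y me RI1 maxideal_char by simp
  have Wp: "0 \<le> w \<and> w \<notin> SG \<and> w + mlt \<in> SG" if w: "w \<in> W" for w
  proof -
    obtain x where x: "x \<in> AA 1" "x \<noteq> 0" "v x = w" using w unfolding W_def vs_def by blast
    have "0 \<le> w" using x AA1_Rb Rb_iff by auto
    moreover have "x * y \<in> R" using x ym unfolding colon_def by blast
    then have "w + mlt \<in> SG" using vmult[OF x(2) y(2)] x y unfolding value_semigroup_def
      by (intro CollectI exI[of _ "x * y"]) simp
    ultimately show ?thesis using w unfolding W_def by blast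
  qed
  have img: "(\<lambda>w. w mod mlt) ` W \<subseteq> {1..<mlt}"
  proof
    fix z assume "z \<in> (\<lambda>w. w mod mlt) ` W"
    then obtain w where w: "w \<in> W" "z = w mod mlt" by blast
    have "z \<noteq> 0"
    proof
      assume "z = 0"
      then have "w = (w div mlt) * mlt" using w div_mult_mod_eq[of w mlt] by simp
      moreover have "0 \<le> w div mlt" using Wp[OF w(1)] me pos_imp_zdiv_nonneg_iff by blast
      ultimately show False using mult_SG'[of "w div mlt"] Wp[OF w(1)] by simp
    qed
    moreover have "0 \<le> z" "z < mlt" using w me by auto
    ultimately show "z \<in> {1..<mlt}" by simp
  qed
  have inj: "inj_on (\<lambda>w. w mod mlt) W"
  proof (rule inj_onI)
    have key: "False" if a: "w1 \<in> W" "w2 \<in> W" "w1 mod mlt = w2 mod mlt" "w1 < w2" for w1 w2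
    proof -
      have "mlt dvd (w2 - w1)" using a(3) mod_eq_dvd_iff[of w2 mlt w1] by simp
      then obtain q where q: "w2 - w1 = mlt * q" by blast
      have "0 < mlt * q" using q a(4) by simp
      then have "0 < q" using me(1) zero_less_mult_pos by blast
      have eq: "w2 = (w1 + mlt) + (q - 1) * mlt" using q by (simp add: algebra_simps)
      have "(q - 1) * mlt \<in> SG" using mult_SG' \<open>0 < q\<close> by simp
      then have "(w1 + mlt) + (q - 1) * mlt \<in> SG" using SG_add Wp[OF a(1)] by blast
      then have "w2 \<in> SG" using eq by simp
      then show False using Wp[OF a(2)] by blast
    qed
    fix w1 w2 assume "w1 \<in> W" "w2 \<in> W" "w1 mod mlt = w2 mod mlt"
    show "w1 = w2"
    proof (rule ccontr)
      assume "w1 \<noteq> w2"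
      then have "w1 < w2 \<or> w2 < w1" by linarith
      then show False using key[of w1 w2] key[of w2 w1] \<open>w1 \<in> W\<close> \<open>w2 \<in> W\<close> \<open>w1 mod mlt = w2 mod mlt\<close> by auto
    qed
  qed
  have "card W = card ((\<lambda>w. w mod mlt) ` W)" using card_image[OF inj] by simp
  also have "\<dots> \<le> card {1..<mlt}" by (rule card_mono[OF _ img]) simp
  finally show ?thesis unfolding W_def using me by simp
qed

lemma sum_tst_gen: assumes "i \<le> n0"
  shows "(\<Sum>j\<in>{1..i}. card (vs v (AA j) - vs v (AA (j - 1)))) = card (vs v (AA i) - SG)"
proof -
  have mono: "\<forall>j<i. vs v (AA j) \<subseteq> vs v (AA (Suc j))" using AA_mono vs_mono by (metis le_SucI order_refl)
  have fin: "finite (vs v (AA i) - vs v (AA 0))" using fin_diff[OF colon_RI_Rb[OF assms] R_AA] .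
  show ?thesis
    using telescope[of i "\<lambda>j. vs v (AA j)"] mono fin AA0 SG_vs by simp
qed

lemma sum_tst: "(\<Sum>i\<in>{1..n0}. card (vs v (AA i) - vs v (AA (i - 1)))) = card ({0..<cond} - SG)"
proof -
  have mono: "\<forall>i<n0. vs v (AA i) \<subseteq> vs v (AA (Suc i))" using AA_mono vs_mono by (metis le_SucI order_refl)
  have fin: "finite (vs v (AA n0) - vs v (AA 0))" using fin_diff[OF colon_RI_Rb[OF order_refl] R_AA] .
  have "(\<Sum>i\<in>{1..n0}. card (vs v (AA i) - vs v (AA (i - 1)))) = card (vs v (AA n0) - vs v (AA 0))"
    using telescope[of n0 "\<lambda>i. vs v (AA i)"] mono fin by blast
  also have "vs v (AA n0) - vs v (AA 0) = {0..<cond} - SG"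
  proof
    show "vs v (AA n0) - vs v (AA 0) \<subseteq> {0..<cond} - SG"
    proof
      fix x assume x: "x \<in> vs v (AA n0) - vs v (AA 0)"
      have xn: "x \<notin> SG" using x SG_vs AA0 by simp
      then have "\<not> cond \<le> x" using cond_ge by blast
      then show "x \<in> {0..<cond} - SG" using x xn vs_Rb colon_n0 by auto
    qed
    show "{0..<cond} - SG \<subseteq> vs v (AA n0) - vs v (AA 0)" using vs_Rb SG_vs colon_n0 AA0 by auto
  qed
  finally show ?thesis .
qed

abbreviation "rs \<equiv> type_seq_term R v"
abbreviation "typ \<equiv> cm_type R"
abbreviation "del \<equiv> delta_inv R"

lemma rs_bounds: assumes i: "1 \<le> i" "i \<le> n0" shows "1 \<le> rs i" "rs i \<le> typ"
proof -
  obtain u where u: "u \<in> R" "u \<noteq> 0" "v u = sq (i - 1)" using u_ex by blast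
  show "1 \<le> rs i" using tst_eq[OF i] tst_pos[OF i] by simp
  have "card (vs v (AA i) - vs v (AA (i - 1))) \<le> card (vs v (AA 1) - SG)"
    using chain_map[OF i u] DD_le_typ[OF i u] by linarith
  then show "rs i \<le> typ" using tst_eq[OF i] typ_eq by simp
qed

lemma sum_rs: "(\<Sum>i\<in>{1..n0}. rs i) = del"
proof -
  have "(\<Sum>i\<in>{1..n0}. rs i) = (\<Sum>i\<in>{1..n0}. int (card (vs v (AA i) - vs v (AA (i - 1)))))"
    by (rule sum.cong) (auto simp: tst_eq)
  also have "\<dots> = int (\<Sum>i\<in>{1..n0}. card (vs v (AA i) - vs v (AA (i - 1))))" by simp
  also have "\<dots> = del" using sum_tst delta_eq by simp
  finally show ?thesis .
qed

lemma cond_del: "cond - del = int n0"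
  using cond_split delta_eq by simp

lemma b_eq: "b_inv R v = (\<Sum>i\<in>{1..n0}. typ - rs i)"
proof -
  have "(\<Sum>i\<in>{1..n0}. typ - rs i) = (\<Sum>i\<in>{1..n0}. typ) - (\<Sum>i\<in>{1..n0}. rs i)"
    by (rule sum_subtractf)
  also have "(\<Sum>i\<in>{1..n0}. typ) = int n0 * typ" by simp
  finally have e: "(\<Sum>i\<in>{1..n0}. typ - rs i) = int n0 * typ - del" unfolding sum_rs .
  have "b_inv R v = (cond - del) * typ - del" unfolding b_inv_def ..
  also have "\<dots> = int n0 * typ - del" unfolding cond_del ..
  finally show ?thesis using e by simp
qed

lemma b0_iff: "b_inv R v = 0 \<longleftrightarrow> (\<forall>i\<in>{1..n0}. rs i = typ)"
proof -
  have nn: "\<And>i. i \<in> {1..n0} \<Longrightarrow> 0 \<le> typ - rs i"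
  proof -
    fix i assume "i \<in> {1..n0}"
    then have "1 \<le> i" "i \<le> n0" by auto
    then show "0 \<le> typ - rs i" using rs_bounds(2) by simp
  qed
  have "b_inv R v = 0 \<longleftrightarrow> (\<forall>i\<in>{1..n0}. typ - rs i = 0)"
    unfolding b_eq by (rule sum_nonneg_eq_0_iff[OF finite_atLeastAtMost nn])
  moreover have "(\<forall>i\<in>{1..n0}. typ - rs i = 0) \<longleftrightarrow> (\<forall>i\<in>{1..n0}. rs i = typ)" by auto
  ultimately show ?thesis by simp
qed

lemma b_nonneg: "0 \<le> b_inv R v"
  unfolding b_eq
proof (rule sum_nonneg)
  fix i assume "i \<in> {1..n0}"
  then have "1 \<le> i" "i \<le> n0" by auto
  then show "0 \<le> typ - rs i" using rs_bounds(2) by simp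
qed

lemma tseq: "type_sequence R v = map rs [1..<n0 + 1]"
  unfolding type_sequence_def nlen ..

lemma list_iff: "type_sequence R v = replicate (length (type_sequence R v)) typ \<longleftrightarrow> (\<forall>i\<in>{1..n0}. rs i = typ)"
proof -
  have "type_sequence R v = replicate (length (type_sequence R v)) typ \<longleftrightarrow> (\<forall>y\<in>set (type_sequence R v). y = typ)"
    by (rule rep_iff)
  also have "\<dots> \<longleftrightarrow> (\<forall>i\<in>{1..n0}. rs i = typ)"
  proof -
    have "set [1..<n0 + 1] = {1..n0}" by auto
    then have "set (type_sequence R v) = rs ` {1..n0}" unfolding tseq by simp
    then show ?thesis by simp
  qed
  finally show ?thesis .
qed

lemma gor: assumes t: "typ = 1" shows "b_inv R v = 0"
  unfolding b0_iff
proof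
  fix i assume "i \<in> {1..n0}"
  then have "1 \<le> rs i" "rs i \<le> typ" using rs_bounds by auto
  then show "rs i = typ" using t by simp
qed

lemma form_b0:
  assumes p: "SG = {k * mlt | k. 0 \<le> k \<and> k \<le> p} \<union> {m. (p + 1) * mlt \<le> m}"
  shows "b_inv R v = 0"
proof -
  have me: "0 < mlt" using mlt_props by simp
  have big: "\<forall>k::nat. (p + 1) * mlt + int k \<in> SG" using p by auto
  then have "(p + 1) * mlt \<in> SG" by (metis add.right_neutral of_nat_0)
  then have cle: "cond \<le> (p + 1) * mlt" using cond_min big by blast
  obtain K where K: "cond = K * mlt" "0 \<le> K"
  proof (cases "cond \<in> {k * mlt | k. 0 \<le> k \<and> k \<le> p}")
    case True then show ?thesis using that by blast
  next
    case False
    then have "(p + 1) * mlt \<le> cond" using cond_SG p by blast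
    then have "cond = (p + 1) * mlt" using cle by simp
    moreover have "0 \<le> p + 1" using cond_pos me \<open>cond = (p + 1) * mlt\<close> zero_less_mult_pos2 by fastforce
    ultimately show ?thesis using that by blast
  qed
  have sub: "SG \<inter> {0..<cond} \<subseteq> (\<lambda>k. k * mlt) ` {0..<K}"
  proof
    fix w assume w: "w \<in> SG \<inter> {0..<cond}"
    then have "\<not> (p + 1) * mlt \<le> w" using cle by simp
    then obtain k where k: "w = k * mlt" "0 \<le> k" using w p by blast
    have "k * mlt < K * mlt" using w k K by simp
    then have "k < K" using me by simp
    then show "w \<in> (\<lambda>k. k * mlt) ` {0..<K}" using k by auto
  qed
  have "n0 \<le> card ((\<lambda>k. k * mlt) ` {0..<K})" unfolding n0_def by (rule card_mono[OF _ sub]) simp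
  also have "\<dots> \<le> card {0..<K}" by (rule card_image_le) simp
  finally have "int n0 \<le> K" using K by simp
  then have "int n0 * mlt \<le> cond" using K me by simp
  then have "int n0 * (mlt - 1) \<le> del" using cond_del by (simp add: algebra_simps)
  moreover have "typ \<le> mlt - 1" using typ_le typ_eq by simp
  then have "int n0 * typ \<le> int n0 * (mlt - 1)" by (simp add: mult_left_mono)
  ultimately have "int n0 * typ - del \<le> 0" by simp
  moreover have "b_inv R v = int n0 * typ - del" unfolding b_inv_def cond_del ..
  ultimately show ?thesis using b_nonneg by simp
qed

lemma b0_form:
  assumes b0: "b_inv R v = 0"
  shows "typ = 1 \<or> (\<exists>p::int. SG = {k * mlt | k. 0 \<le> k \<and> k \<le> p} \<union> {m. (p + 1) * mlt \<le> m})"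
proof -
  have me: "0 < mlt" "mlt \<in> SG" using mlt_props by auto
  have allr: "\<forall>i\<in>{1..n0}. rs i = typ" using b0 b0_iff by simp
  define i where "i = n0"
  have i: "1 \<le> i" "i \<le> n0" using n0_pos i_def by auto
  define s' where "s' = sq (i - 1)"
  obtain u where u: "u \<in> R" "u \<noteq> 0" "v u = sq (i - 1)" using u_ex by blast
  define D where "D = DD u (AA i)"
  define W where "W = vs v (AA 1) - SG"
  have AAi: "AA i = Rb" using colon_n0 i_def by simp
  have sqi: "sq i = cond" using sq_n0 i_def by simp
  have sqs: "sq (Suc (i - 1)) = cond" using sqi i by simp
  have finW: "finite W" unfolding W_def using fin_diff[OF AA1_Rb order_refl] SG_vs by simp
  have DW: "vs v D - SG \<subseteq> W" unfolding W_def D_def using vs_mono[OF DD_AA1[OF i u]] by blast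
  have c1: "card (vs v (AA i) - vs v (AA (i - 1))) \<le> card (vs v D - SG)" unfolding D_def by (rule chain_map[OF i u])
  have "rs i = typ" using allr i by simp
  then have "card (vs v (AA i) - vs v (AA (i - 1))) = card W" using tst_eq[OF i] typ_eq W_def by simp
  then have "card W \<le> card (vs v D - SG)" using c1 by simp
  then have DWeq: "vs v D - SG = W" using card_seteq[OF finW DW] by simp
  have Dsub: "D \<subseteq> AA 1" unfolding D_def by (rule DD_AA1[OF i u])
  have s'SG: "s' \<in> SG" unfolding s'_def by (rule sq_SG)
  have W1: "W \<subseteq> {s'<..<cond}"
  proof
    fix w assume "w \<in> W"
    then have w: "w \<in> vs v D" "w \<notin> SG" using DWeq by auto
    then obtain p where pp: "p \<in> D" "p \<noteq> 0" "w = v p" unfolding vs_def by blast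
    then obtain x a where xa: "p = u * x + a" "x \<in> Rb" "a \<in> R" unfolding D_def DD_def AAi by blast
    have "w < cond" using w(2) cond_ge[of w] not_le by blast
    moreover have "s' \<le> w"
    proof (cases "x = 0")
      case True then have "w \<in> SG" using xa pp unfolding value_semigroup_def by auto
      then show ?thesis using w by simp
    next
      case x0: False
      have vux: "v (u * x) = s' + v x" "0 \<le> v x" "u * x \<noteq> 0"
        using vmult[OF u(2) x0] u xa x0 s'_def by (auto simp: Rb_iff)
      show ?thesis
      proof (cases "a = 0")
        case True then show ?thesis using vux pp xa by simp
      next
        case a0: False
        have va: "v a \<in> SG" using a0 xa unfolding value_semigroup_def by blast
        have "v p = v (u * x) \<and> v (u * x) < v a \<or> v p = v a \<and> v a < v (u * x) \<or> (v (u * x) = v a \<and> v (u * x) \<le> v p)"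
          using vsum_cases[OF vux(3) a0] pp xa by simp
        then show ?thesis using vux va w pp by auto
      qed
    qed
    moreover have "w \<noteq> s'" using w s'SG by auto
    ultimately show "w \<in> {s'<..<cond}" by simp
  qed
  have W2: "{s'<..<cond} \<subseteq> W"
  proof
    fix j assume j: "j \<in> {s'<..<cond}"
    obtain x where x: "x \<noteq> 0" "v x = j - s'" using vval by blast
    have xRb: "x \<in> Rb" using x j by (simp add: Rb_iff)
    have "u * x = u * x + 0" by simp
    then have "u * x \<in> D" unfolding D_def DD_def AAi using xRb R0 by blast
    moreover have "v (u * x) = j" using vmult[OF u(2) x(1)] u x s'_def by simp
    moreover have "u * x \<noteq> 0" using u x by simp
    ultimately have "j \<in> vs v D" unfolding vs_def by force
    moreover have "j \<notin> SG"
    proof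
      assume "j \<in> SG"
      then have "sq (Suc (i - 1)) \<le> j" using sq_least j s'_def by simp
      then show False using sqs j by simp
    qed
    ultimately show "j \<in> W" using DWeq by blast
  qed
  have Weq: "W = {s'<..<cond}" using W1 W2 by blast
  have typv: "typ = cond - s' - 1"
  proof -
    have "typ = int (card W)" using typ_eq W_def by simp
    also have "\<dots> = int (nat (cond - (s' + 1)))" unfolding Weq by simp
    also have "\<dots> = cond - s' - 1" using sq_mono[of "i - 1" i] i sqi s'_def by simp
    finally show ?thesis .
  qed
  obtain y where y: "y \<in> R" "y \<noteq> 0" "mlt = v y" using me(2) unfolding value_semigroup_def by blast
  have ym: "y \<in> val_ideal R v 1" using y me RI1 maxideal_char by simp
  have above: "s' + mlt + int k \<in> SG" for k :: nat
  proof -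
    obtain x where x: "x \<noteq> 0" "v x = int k" using vval by blast
    have xRb: "x \<in> Rb" using x by (simp add: Rb_iff)
    have "u * x = u * x + 0" by simp
    then have "u * x \<in> D" unfolding D_def DD_def AAi using xRb R0 by blast
    then have "u * x \<in> AA 1" using Dsub by blast
    then have uxy: "u * x * y \<in> R" using ym unfolding colon_def by blast
    have "v (u * x * y) = s' + mlt + int k" using vmult[OF u(2) x(1)] vmult[of "u * x" y] u x y s'_def by simp
    moreover have "u * x * y \<noteq> 0" using u x y by simp
    ultimately show ?thesis using uxy unfolding value_semigroup_def by (intro CollectI exI[of _ "u * x * y"]) simp
  qed
  have "s' + mlt \<in> SG" using above[of 0] by simp
  then have cle: "cond \<le> s' + mlt" using cond_min above by blast
  define q where "q = cond - s'"
  have "1 \<le> rs 1" "rs 1 \<le> typ" using rs_bounds[of 1] n0_pos by auto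
  then have t1: "1 \<le> typ" by simp
  have q2: "2 \<le> q" using typv t1 q_def by simp
  have qm: "q \<le> mlt" using cle q_def by simp
  have mc: "mlt \<le> cond" using mlt_props cond_SG cond_pos by blast
  have hi: "w \<in> SG" if w: "cond - mlt \<le> w" "w \<le> s'" for w
  proof (rule ccontr)
    assume wn: "w \<notin> SG"
    obtain x where x: "x \<noteq> 0" "v x = w" using vval by blast
    have "x \<in> AA 1" unfolding colon_def
    proof (intro CollectI ballI)
      fix z assume z: "z \<in> val_ideal R v 1"
      show "x * z \<in> R"
      proof (cases "z = 0")
        case True then show ?thesis using R0 by simp
      next
        case False
        then have "mlt \<le> v z" using z sq1 unfolding val_ideal_def by simp
        then have "cond \<le> v (x * z)" using vmult[OF x(1) False] x w by simp
        then show ?thesis using cond_R x False by simp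
      qed
    qed
    then have "w \<in> W" using x wn unfolding W_def vs_def by blast
    then have "s' < w" using Weq by simp
    then show False using w(2) by simp
  qed
  have seg: "SG \<inter> {cond - mlt..<cond} = {cond - mlt..s'}"
  proof
    show "SG \<inter> {cond - mlt..<cond} \<subseteq> {cond - mlt..s'}"
    proof
      fix w assume w: "w \<in> SG \<inter> {cond - mlt..<cond}"
      have "\<not> s' < w"
      proof
        assume "s' < w"
        then have "w \<in> W" using Weq w by simp
        then show False using w unfolding W_def by blast
      qed
      then show "w \<in> {cond - mlt..s'}" using w by simp
    qed
    show "{cond - mlt..s'} \<subseteq> SG \<inter> {cond - mlt..<cond}"
    proof
      fix w assume w: "w \<in> {cond - mlt..s'}"
      then have "w \<in> SG" using hi by simp
      moreover have "w < cond" using w q2 q_def by simp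
      ultimately show "w \<in> SG \<inter> {cond - mlt..<cond}" using w by simp
    qed
  qed
  have cardseg: "card (SG \<inter> {cond - mlt..<cond}) = nat (mlt - q + 1)" unfolding seg q_def by simp
  define i1 where "i1 = card (SG \<inter> {0..<cond - mlt})"
  have cmS: "cond - mlt \<in> SG" using hi qm q_def by simp
  have sqi1: "sq i1 = cond - mlt" unfolding i1_def by (rule sq_at[OF cmS])
  have spl: "SG \<inter> {0..<cond} = (SG \<inter> {0..<cond - mlt}) \<union> (SG \<inter> {cond - mlt..<cond})"
    using mc me by auto
  have "n0 = i1 + card (SG \<inter> {cond - mlt..<cond})" unfolding n0_def i1_def spl
    by (rule card_Un_disjoint) auto
  then have n0i1: "int n0 = int i1 + (mlt - q + 1)" using cardseg qm by simp
  have i1n0: "i1 \<le> n0" using n0i1 qm by simp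
  have sumi1: "int (card (vs v (AA i1) - SG)) = int i1 * typ"
  proof -
    have "card (vs v (AA i1) - SG) = (\<Sum>j\<in>{1..i1}. card (vs v (AA j) - vs v (AA (j - 1))))"
      using sum_tst_gen[OF i1n0] by simp
    then have "int (card (vs v (AA i1) - SG)) = (\<Sum>j\<in>{1..i1}. int (card (vs v (AA j) - vs v (AA (j - 1)))))"
      by simp
    also have "\<dots> = (\<Sum>j\<in>{1..i1}. rs j)" by (rule sum.cong) (use i1n0 in \<open>auto simp: tst_eq\<close>)
    also have "\<dots> = (\<Sum>j\<in>{1..i1}. typ)" by (rule sum.cong) (use allr i1n0 in auto)
    finally show ?thesis by simp
  qed
  have gapsub: "{mlt..<cond} - SG \<subseteq> vs v (AA i1) - SG"
  proof
    fix w assume w: "w \<in> {mlt..<cond} - SG"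
    obtain x where x: "x \<noteq> 0" "v x = w" using vval by blast
    have "x \<in> AA i1" unfolding colon_def
    proof (intro CollectI ballI)
      fix z assume z: "z \<in> val_ideal R v i1"
      show "x * z \<in> R"
      proof (cases "z = 0")
        case True then show ?thesis using R0 by simp
      next
        case False
        then have "cond - mlt \<le> v z" using z sqi1 unfolding val_ideal_def by simp
        then have "cond \<le> v (x * z)" using vmult[OF x(1) False] x w by simp
        then show ?thesis using cond_R x False by simp
      qed
    qed
    then show "w \<in> vs v (AA i1) - SG" using x w unfolding vs_def by blast
  qed
  have fin1: "finite (vs v (AA i1) - SG)" using fin_diff[OF colon_RI_Rb[OF i1n0] order_refl] SG_vs by simp
  have cgap: "card ({mlt..<cond} - SG) \<le> card (vs v (AA i1) - SG)" by (rule card_mono[OF fin1 gapsub])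
  have dsplit: "{0..<cond} - SG = {1..<mlt} \<union> ({mlt..<cond} - SG)"
  proof
    show "{0..<cond} - SG \<subseteq> {1..<mlt} \<union> ({mlt..<cond} - SG)"
    proof
      fix w assume w: "w \<in> {0..<cond} - SG"
      then have "w \<noteq> 0" using SG0 by auto
      then have "1 \<le> w" using w by simp
      then show "w \<in> {1..<mlt} \<union> ({mlt..<cond} - SG)" using w by auto
    qed
    have "w \<notin> SG" if wi: "w \<in> {1..<mlt}" for w
    proof
      assume "w \<in> SG"
      then have "mlt \<le> w" using wi mlt_props by auto
      then show False using wi by simp
    qed
    then show "{1..<mlt} \<union> ({mlt..<cond} - SG) \<subseteq> {0..<cond} - SG" using mc me by auto
  qed
  have "card ({0..<cond} - SG) = card {1..<mlt} + card ({mlt..<cond} - SG)"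
    unfolding dsplit by (rule card_Un_disjoint) auto
  then have "del = (mlt - 1) + int (card ({mlt..<cond} - SG))" using delta_eq me by simp
  then have ineq1: "del - (mlt - 1) \<le> int i1 * typ" using cgap sumi1 by linarith
  have "del = (\<Sum>i\<in>{1..n0}. rs i)" using sum_rs by simp
  also have "\<dots> = (\<Sum>i\<in>{1..n0}. typ)" using allr by simp
  also have "\<dots> = int n0 * typ" by simp
  finally have deln: "del = int n0 * typ" .
  have "(int n0 - int i1) * typ \<le> mlt - 1" using ineq1 deln by (simp add: algebra_simps)
  then have "(mlt - q + 1) * (q - 1) \<le> mlt - 1" using n0i1 typv q_def by simp
  then have "(mlt - q) * (q - 2) \<le> 0" by (simp add: algebra_simps)
  then have "q = 2 \<or> q = mlt"
  proof -
    assume pr: "(mlt - q) * (q - 2) \<le> 0"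
    show ?thesis
    proof (rule ccontr)
      assume "\<not> (q = 2 \<or> q = mlt)"
      then have "0 < mlt - q" "0 < q - 2" using q2 qm by auto
      then have "0 < (mlt - q) * (q - 2)" by (rule mult_pos_pos)
      then show False using pr by simp
    qed
  qed
  then have "typ = 1 \<or> q = mlt" using typv q_def by auto
  then show ?thesis
  proof (elim disjE)
    assume "typ = 1" then show ?thesis by simp
  next
    assume "q = mlt"
    then have typm: "typ = mlt - 1" using typv q_def by simp
    have "del = (\<Sum>i\<in>{1..n0}. rs i)" using sum_rs by simp
    also have "\<dots> = (\<Sum>i\<in>{1..n0}. typ)" using allr by simp
    also have "\<dots> = int n0 * (mlt - 1)" using typm by simp
    finally have "del = int n0 * (mlt - 1)" .
    then have cn: "cond = int n0 * mlt" using cond_del by (simp add: algebra_simps)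
    define T where "T = (\<lambda>k. int k * mlt) ` {..<n0}"
    have TS: "T \<subseteq> SG \<inter> {0..<cond}"
    proof
      fix w assume "w \<in> T"
      then obtain k where k: "k < n0" "w = int k * mlt" unfolding T_def by blast
      have "int k * mlt < int n0 * mlt" using k me by simp
      then show "w \<in> SG \<inter> {0..<cond}" using k mult_SG[of k] me cn by simp
    qed
    have "inj_on (\<lambda>k. int k * mlt) {..<n0}" using me by (intro inj_onI) simp
    then have "card T = n0" unfolding T_def by (simp add: card_image)
    then have Teq: "T = SG \<inter> {0..<cond}" using card_seteq[OF _ TS] n0_def by simp
    show ?thesis
    proof (intro disjI2 exI[of _ "int n0 - 1"] set_eqI iffI)
      fix w assume w: "w \<in> SG"
      show "w \<in> {k * mlt | k. 0 \<le> k \<and> k \<le> int n0 - 1} \<union> {m. (int n0 - 1 + 1) * mlt \<le> m}"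
      proof (cases "cond \<le> w")
        case True then show ?thesis using cn by simp
      next
        case False
        then have "w \<in> T" using Teq w SG_nonneg by simp
        then obtain k where "k < n0" "w = int k * mlt" unfolding T_def by blast
        then show ?thesis by force
      qed
    next
      fix w assume "w \<in> {k * mlt | k. 0 \<le> k \<and> k \<le> int n0 - 1} \<union> {m. (int n0 - 1 + 1) * mlt \<le> m}"
      then show "w \<in> SG" using mult_SG' cond_ge cn by auto
    qed
  qed
qed

end

theorem theorem3p1:
  fixes R :: "'k::field set" and v :: "'k \<Rightarrow> int"
  assumes "subring R"
    and "quotient_field_of R"
    and "local_ring R"
    and "noetherian R"
    and "dim_one_local R"
    and "\<not> regular_local R"
    and "discrete_valuation v"
    and "int_closure R = val_ring v"
    and "finite_module R (int_closure R)"
    and "residually_rational R v"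
  shows "(b_inv R v = 0 \<longleftrightarrow>
           (cm_type R = 1 \<or>
            (\<exists>p::int. value_semigroup R v =
               {k * multiplicity_val R v | k. 0 \<le> k \<and> k \<le> p} \<union>
               {m. (p + 1) * multiplicity_val R v \<le> m})))
       \<and> (b_inv R v = 0 \<longleftrightarrow>
           type_sequence R v = replicate (length (type_sequence R v)) (cm_type R))"
proof -
  interpret asetup R v
    by (rule asetup.intro) (use assms in auto)
  have A: "b_inv R v = 0 \<longleftrightarrow>
           (cm_type R = 1 \<or>
            (\<exists>p::int. value_semigroup R v =
               {k * multiplicity_val R v | k. 0 \<le> k \<and> k \<le> p} \<union>
               {m. (p + 1) * multiplicity_val R v \<le> m}))"
  proof
    assume "b_inv R v = 0"
    then show "cm_type R = 1 \<or>
            (\<exists>p::int. value_semigroup R v =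
               {k * multiplicity_val R v | k. 0 \<le> k \<and> k \<le> p} \<union>
               {m. (p + 1) * multiplicity_val R v \<le> m})" by (rule b0_form)
  next
    assume "cm_type R = 1 \<or>
            (\<exists>p::int. value_semigroup R v =
               {k * multiplicity_val R v | k. 0 \<le> k \<and> k \<le> p} \<union>
               {m. (p + 1) * multiplicity_val R v \<le> m})"
    then show "b_inv R v = 0"
    proof (elim disjE exE)
      assume "cm_type R = 1" then show ?thesis by (rule gor)
    next
      fix p assume "value_semigroup R v =
               {k * multiplicity_val R v | k. 0 \<le> k \<and> k \<le> p} \<union>
               {m. (p + 1) * multiplicity_val R v \<le> m}"
      then show ?thesis by (rule form_b0)
    qed
  qed
  have B: "b_inv R v = 0 \<longleftrightarrow>
           type_sequence R v = replicate (length (type_sequence R v)) (cm_type R)"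
    using b0_iff list_iff by simp
  show ?thesis using A B by blast
qed

end
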